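(* The set consisting of all $\omega_x$ for $x\in\mathrm{Aper}(\sigma)$, together with all $\omega_{x,c}$ for $x\in\bigcup_{q\ge1}\mathrm{Per}_q(\sigma)^\circ$ and $c\in\mathbb{T}$, is a dense subset of the maximal ideal space $\Delta(C(X)'_1)$, and it separates the points of $C(X)'_1$.
   Context: Let $X$ be a non-empty compact Hausdorff space and $\sigma:X\to X$ a homeomorphism. For $n\in\mathbb{Z}$ let $\mathrm{Fix}_n(\sigma)=\{x:\sigma^nx=x\}$; for $p\ge1$ let $\mathrm{Per}_p(\sigma)$ be the set of points of least period $p$; $\mathrm{Aper}(\sigma)$ is the set of points that are not periodic. A superscript $\circ$ denotes interior, $\mathrm{supp}(f)$ the closure of $\{f\ne0\}$. $C(X)$ is the algebra of continuous complex functions with sup norm, $\alpha(f)=f\circ\sigma^{-1}$. $\ell^1(\Sigma)$ is the set of $\ell:\mathbb{Z}\to C(X)$ with $\|\ell\|=\sum_k\|\ell(k)\|_\infty<\infty$, product $(\ell\ell')(n)=\sum_k\ell(k)\alpha^k(\ell'(n-k))$, involution $\ell^*(n)=\overline{\alpha^n(\ell(-n))}$; writing $f_k=\ell(k)$ each element is written $\sum_kf_k\delta^k$. $C(X)'_1$ is the commutant in $\ell^1(\Sigma)$ of $C(X)$ (embedded as elements supported at $0$); it equals $\{\sum_kf_k\delta^k:\mathrm{supp}(f_k)\subset\mathrm{Fix}_k(\sigma)\ \forall k\}$ and is commutative, with maximal ideal space $\Delta(C(X)'_1)$ in the Gelfand topology. For $x\notin\bigcup_{q\ge1}\mathrm{Fix}_q(\sigma)^\circ$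 (in particular for $x\in\mathrm{Aper}(\sigma)$), $\omega_x$ is the character $\sum_kf_k\delta^k\mapsto f_0(x)$; for $x\in\bigcup_{q\ge1}\mathrm{Fix}_q(\sigma)^\circ$ (in particular for $x\in\bigcup_{q\ge1}\mathrm{Per}_q(\sigma)^\circ$) and $c\in\mathbb{T}$, $\omega_{x,c}$ is the character $\sum_kf_k\delta^k\mapsto\sum_jf_{jn}(x)c^j$, with $n$ the minimal $n\ge1$ such that $x\in\mathrm{Fix}_n(\sigma)^\circ$. *)

theory Defs
  imports "HOL-Analysis.Analysis"
begin

text \<open>The compact Hausdorff space X is the universe of a type 'a of class t2_space
  with compact UNIV. Elements of l1(Sigma) are functions int => 'a => complex.\<close>

definition ipow :: "('a \<Rightarrow> 'a) \<Rightarrow> int \<Rightarrow> 'a \<Rightarrow> 'a" where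
  "ipow \<sigma> n = (if 0 \<le> n then \<sigma> ^^ nat n else (inv \<sigma>) ^^ nat (- n))"

definition Fix :: "('a \<Rightarrow> 'a) \<Rightarrow> int \<Rightarrow> 'a set" where
  "Fix \<sigma> n = {x. ipow \<sigma> n x = x}"

definition Per :: "('a \<Rightarrow> 'a) \<Rightarrow> nat \<Rightarrow> 'a set" where
  "Per \<sigma> p = {x. 1 \<le> p \<and> ipow \<sigma> (int p) x = x \<and>
                   (\<forall>m. 1 \<le> m \<and> m < p \<longrightarrow> ipow \<sigma> (int m) x \<noteq> x)}"

definition Aper :: "('a \<Rightarrow> 'a) \<Rightarrow> 'a set" where
  "Aper \<sigma> = {x. \<forall>p::nat. 1 \<le> p \<longrightarrow> ipow \<sigma> (int p) x \<noteq> x}"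

definition supn :: "('a \<Rightarrow> complex) \<Rightarrow> real" where
  "supn f = (SUP x. cmod (f x))"

definition l1 :: "(int \<Rightarrow> 'a::topological_space \<Rightarrow> complex) set" where
  "l1 = {l. (\<forall>k. continuous_on UNIV (l k)) \<and> (\<lambda>k. supn (l k)) summable_on UNIV}"

text \<open>Product in l1(Sigma): (l l')(n) = sum_k l(k) alpha^k(l'(n-k)), alpha^k f = f o sigma^(-k),
  evaluated pointwise.\<close>
definition l1_mult :: "('a \<Rightarrow> 'a) \<Rightarrow> (int \<Rightarrow> 'a \<Rightarrow> complex) \<Rightarrow> (int \<Rightarrow> 'a \<Rightarrow> complex)
    \<Rightarrow> (int \<Rightarrow> 'a \<Rightarrow> complex)" where
  "l1_mult \<sigma> l l' = (\<lambda>n x. \<Sum>\<^sub>\<infinity>k::int. l k x * l' (n - k) (ipow \<sigma> (- k) x))"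

definition emb :: "('a \<Rightarrow> complex) \<Rightarrow> (int \<Rightarrow> 'a \<Rightarrow> complex)" where
  "emb f = (\<lambda>n. if n = 0 then f else (\<lambda>_. 0))"

definition commutant :: "('a::topological_space \<Rightarrow> 'a) \<Rightarrow> (int \<Rightarrow> 'a \<Rightarrow> complex) set" where
  "commutant \<sigma> = {l \<in> l1. \<forall>f. continuous_on UNIV f \<longrightarrow>
                         l1_mult \<sigma> l (emb f) = l1_mult \<sigma> (emb f) l}"

text \<open>Maximal ideal space = characters (nonzero multiplicative linear functionals) of
  C(X)'_1, represented as functions restricted (extensional) to C(X)'_1.\<close>
definition characters :: "('a::topological_space \<Rightarrow> 'a) \<Rightarrow> ((int \<Rightarrow> 'a \<Rightarrow> complex) \<Rightarrow> complex) set" where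
  "characters \<sigma> = {\<phi>. \<phi> \<in> extensional (commutant \<sigma>) \<and>
     (\<forall>a\<in>commutant \<sigma>. \<forall>b\<in>commutant \<sigma>. \<phi> (\<lambda>n x. a n x + b n x) = \<phi> a + \<phi> b) \<and>
     (\<forall>a\<in>commutant \<sigma>. \<forall>c. \<phi> (\<lambda>n x. c * a n x) = c * \<phi> a) \<and>
     (\<forall>a\<in>commutant \<sigma>. \<forall>b\<in>commutant \<sigma>. \<phi> (l1_mult \<sigma> a b) = \<phi> a * \<phi> b) \<and>
     (\<exists>a\<in>commutant \<sigma>. \<phi> a \<noteq> 0)}"

text \<open>Gelfand topology: weak-* topology, i.e. the subspace topology of the product
  topology of pointwise convergence on C(X)'_1.\<close>
definition gelfand_topology :: "('a::topological_space \<Rightarrow> 'a)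
    \<Rightarrow> ((int \<Rightarrow> 'a \<Rightarrow> complex) \<Rightarrow> complex) topology" where
  "gelfand_topology \<sigma> =
     subtopology (product_topology (\<lambda>_. euclidean) (commutant \<sigma>)) (characters \<sigma>)"

definition omega_x :: "('a::topological_space \<Rightarrow> 'a) \<Rightarrow> 'a \<Rightarrow> ((int \<Rightarrow> 'a \<Rightarrow> complex) \<Rightarrow> complex)" where
  "omega_x \<sigma> x = restrict (\<lambda>l. l 0 x) (commutant \<sigma>)"

definition min_int_period :: "('a::topological_space \<Rightarrow> 'a) \<Rightarrow> 'a \<Rightarrow> nat" where
  "min_int_period \<sigma> x = (LEAST n::nat. 1 \<le> n \<and> x \<in> interior (Fix \<sigma> (int n)))"

definition omega_xc :: "('a::topological_space \<Rightarrow> 'a) \<Rightarrow> 'a \<Rightarrow> complex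
    \<Rightarrow> ((int \<Rightarrow> 'a \<Rightarrow> complex) \<Rightarrow> complex)" where
  "omega_xc \<sigma> x c = restrict
     (\<lambda>l. \<Sum>\<^sub>\<infinity>j::int. l (j * int (min_int_period \<sigma> x)) x * c powi j) (commutant \<sigma>)"

end

theory Submission
  imports Defs
begin


lemma infsum_single_nz:
  fixes g :: "'b \<Rightarrow> 'c::{comm_monoid_add,t2_space}"
  assumes "\<And>k. k \<noteq> kk \<Longrightarrow> g k = 0"
  shows "infsum g UNIV = g kk"
proof -
  have "infsum g UNIV = infsum g {kk}"
    by (rule infsum_cong_neutral) (use assms in auto)
  then show ?thesis by simp
qed

lemma summable_single_nz:
  fixes g :: "'b \<Rightarrow> 'c::{comm_monoid_add,t2_space}"
  assumes "\<And>k. k \<noteq> kk \<Longrightarrow> g k = 0"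
  shows "g summable_on UNIV"
proof -
  have "g summable_on {kk}" by simp
  then show ?thesis
    by (rule summable_on_cong_neutral[THEN iffD1, rotated -1]) (use assms in auto)
qed

locale dyn =
  fixes \<sigma> :: "'a::t2_space \<Rightarrow> 'a"
  assumes cpt: "compact (UNIV :: 'a set)"
    and bij: "bij \<sigma>"
    and cont: "continuous_on UNIV \<sigma>"
    and conti: "continuous_on UNIV (inv \<sigma>)"
begin

lemma sinv1[simp]: "\<sigma> (inv \<sigma> x) = x" using bij by (simp add: bij_def surj_f_inv_f)
lemma sinv2[simp]: "inv \<sigma> (\<sigma> x) = x" using bij by (simp add: bij_def)

lemma ipow_Suc: "ipow \<sigma> (n+1) = \<sigma> \<circ> ipow \<sigma> n"
proof (cases "0 \<le> n")
  case True
  then have "nat (n+1) = Suc (nat n)" by simp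
  with True show ?thesis by (simp add: ipow_def)
next
  case False
  show ?thesis
  proof (cases "n = -1")
    case True then show ?thesis by (auto simp: ipow_def fun_eq_iff)
  next
    case False2: False
    with False have "nat (-n) = Suc (nat (-(n+1)))" by simp
    with False False2 show ?thesis by (auto simp: ipow_def fun_eq_iff)
  qed
qed

lemma ipow_pred: "ipow \<sigma> (n - 1) = inv \<sigma> \<circ> ipow \<sigma> n"
  using ipow_Suc[of "n-1"] by (auto simp: fun_eq_iff)

lemma ipow_0[simp]: "ipow \<sigma> 0 = id" by (simp add: ipow_def)

lemma ipow_add: "ipow \<sigma> (m+n) = ipow \<sigma> m \<circ> ipow \<sigma> n"
proof (induction m rule: int_induct[where k=0])
  case base then show ?case by simp
next
  case (step1 i)
  have "ipow \<sigma> (i + 1 + n) = ipow \<sigma> ((i+n)+1)" by (simp add: ac_simps)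
  also have "\<dots> = \<sigma> \<circ> ipow \<sigma> (i+n)" by (rule ipow_Suc)
  also have "\<dots> = ipow \<sigma> (i+1) \<circ> ipow \<sigma> n" using step1 by (simp add: ipow_Suc fun_eq_iff)
  finally show ?case .
next
  case (step2 i)
  have "ipow \<sigma> (i - 1 + n) = ipow \<sigma> ((i+n)-1)" by (simp only: diff_add_eq)
  also have "\<dots> = inv \<sigma> \<circ> ipow \<sigma> (i+n)" by (rule ipow_pred)
  also have "\<dots> = ipow \<sigma> (i-1) \<circ> ipow \<sigma> n" using step2 by (simp add: ipow_pred fun_eq_iff)
  finally show ?case .
qed

lemma ipow_add_app: "ipow \<sigma> (m+n) x = ipow \<sigma> m (ipow \<sigma> n x)"
  by (simp add: ipow_add)

lemma ipow_neg_cancel[simp]: "ipow \<sigma> (-k) (ipow \<sigma> k x) = x" "ipow \<sigma> k (ipow \<sigma> (-k) x) = x"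
  using ipow_add_app[of "-k" k x] ipow_add_app[of k "-k" x] by auto

lemma cont_funpow': fixes f :: "'b::topological_space \<Rightarrow> 'b" shows "continuous_on UNIV f \<Longrightarrow> continuous_on UNIV (f ^^ n)"
proof (induction n)
  case 0
  have "f^^0 = (\<lambda>x. x)" by (simp add: fun_eq_iff)
  then show ?case by (simp add: continuous_on_id)
next
  case (Suc n)
  have "continuous_on UNIV (f \<circ> (f^^n))"
    by (rule continuous_on_compose) (use Suc in \<open>auto elim: continuous_on_subset\<close>)
  then show ?case by simp
qed

lemma ipow_cont: "continuous_on UNIV (ipow \<sigma> n)"
  by (simp add: ipow_def cont_funpow' cont conti)

lemma ipow_cont_app: "continuous_on UNIV f \<Longrightarrow> continuous_on UNIV (\<lambda>x. f (ipow \<sigma> n x))"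
proof -
  assume f: "continuous_on UNIV f"
  have "continuous_on UNIV (f \<circ> ipow \<sigma> n)"
    by (rule continuous_on_compose[OF ipow_cont]) (rule continuous_on_subset[OF f], simp)
  then show ?thesis by (simp add: o_def)
qed

lemma Fix_closed: "closed (Fix \<sigma> k)"
  unfolding Fix_def by (rule closed_Collect_eq) (auto intro: ipow_cont continuous_on_id)

lemma Fix_neg: "Fix \<sigma> (-k) = Fix \<sigma> k"
  unfolding Fix_def by (metis ipow_neg_cancel)

lemma Fix_0[simp]: "Fix \<sigma> 0 = UNIV" by (simp add: Fix_def)

lemma Fix_add: "x \<in> Fix \<sigma> a \<Longrightarrow> x \<in> Fix \<sigma> b \<Longrightarrow> x \<in> Fix \<sigma> (a+b)"
  by (simp add: Fix_def ipow_add_app)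

lemma Fix_mult: "x \<in> Fix \<sigma> a \<Longrightarrow> x \<in> Fix \<sigma> (j*a)"
proof (induction j rule: int_induct[where k=0])
  case base then show ?case by simp
next
  case (step1 i) then show ?case using Fix_add[of x "i*a" a] by (simp add: algebra_simps)
next
  case (step2 i) then show ?case using Fix_add[of x "i*a" "-a"] Fix_neg[of a] by (simp add: algebra_simps)
qed

lemma Fix_dvd: "x \<in> Fix \<sigma> a \<Longrightarrow> a dvd b \<Longrightarrow> x \<in> Fix \<sigma> b"
  by (metis Fix_mult dvd_def mult.commute)

lemma Fix_gcd: "x \<in> Fix \<sigma> a \<Longrightarrow> x \<in> Fix \<sigma> b \<Longrightarrow> x \<in> Fix \<sigma> (gcd a b)"
proof -
  assume a: "x \<in> Fix \<sigma> a" and b: "x \<in> Fix \<sigma> b"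
  obtain s t where "s * a + t * b = gcd a b" using bezout_int by blast
  then show ?thesis using Fix_add[OF Fix_mult[OF a, of s] Fix_mult[OF b, of t]] by simp
qed

lemma Per_Fix: "x \<in> Per \<sigma> q \<Longrightarrow> x \<in> Fix \<sigma> (int q)" by (simp add: Per_def Fix_def)

lemma Per_dvd: assumes "x \<in> Per \<sigma> q" "x \<in> Fix \<sigma> k" shows "int q dvd k"
proof (rule ccontr)
  assume nd: "\<not> int q dvd k"
  have q1: "1 \<le> q" using assms by (simp add: Per_def)
  have "x \<in> Fix \<sigma> (k + (-(k div int q)) * int q)"
    by (rule Fix_add[OF assms(2) Fix_mult[OF Per_Fix[OF assms(1)]]])
  moreover have "k + (-(k div int q)) * int q = k mod int q" by (simp add: algebra_simps minus_div_mult_eq_mod)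
  ultimately have x: "x \<in> Fix \<sigma> (int (nat (k mod int q)))" using q1 by simp
  have "k mod int q \<noteq> 0" using nd by (simp add: dvd_eq_mod_eq_0)
  moreover have "0 \<le> k mod int q" "k mod int q < int q" using q1 by auto
  ultimately have "1 \<le> nat (k mod int q)" "nat (k mod int q) < q" by auto
  with x assms(1) show False by (auto simp: Per_def Fix_def)
qed

lemma Aper_Fix: assumes "x \<in> Aper \<sigma>" "x \<in> Fix \<sigma> k" shows "k = 0"
proof (rule ccontr)
  assume "k \<noteq> 0"
  then have "1 \<le> nat \<bar>k\<bar>" by simp
  moreover have "x \<in> Fix \<sigma> (int (nat \<bar>k\<bar>))"
    using assms(2) Fix_neg[of k] by (cases "k \<ge> 0") auto
  ultimately show False using assms(1) by (auto simp: Aper_def Fix_def)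
qed

lemma bdd_cmod: fixes f :: "'a \<Rightarrow> complex" shows "continuous_on UNIV f \<Longrightarrow> bdd_above (range (\<lambda>x. cmod (f x)))"
proof -
  assume c: "continuous_on UNIV f"
  have "compact (f ` UNIV)" by (rule compact_continuous_image[OF c cpt])
  then have "bounded (f ` UNIV)" by (rule compact_imp_bounded)
  then obtain B where "\<forall>y\<in>f ` UNIV. norm y \<le> B" by (auto simp: bounded_iff)
  then show ?thesis by (auto intro!: bdd_aboveI)
qed

lemma supn_ge: fixes f :: "'a \<Rightarrow> complex" shows "continuous_on UNIV f \<Longrightarrow> cmod (f x) \<le> supn f"
  unfolding supn_def by (rule cSUP_upper[OF _ bdd_cmod]) auto

lemma supn_nonneg: fixes f :: "'a \<Rightarrow> complex" shows "continuous_on UNIV f \<Longrightarrow> 0 \<le> supn f"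
  using supn_ge[of f undefined] norm_ge_zero order_trans by blast

lemma supn_le: "(\<And>x. cmod (f x) \<le> B) \<Longrightarrow> supn f \<le> B"
  unfolding supn_def by (rule cSUP_least) auto

lemma supn_zero[simp]: "supn (\<lambda>_. 0) = 0"
  by (simp add: supn_def)

end


definition single :: "int \<Rightarrow> ('a \<Rightarrow> complex) \<Rightarrow> int \<Rightarrow> 'a \<Rightarrow> complex" where
  "single k f = (\<lambda>n. if n = k then f else (\<lambda>_. 0))"

lemma emb_single: "emb f = single 0 f" by (simp add: emb_def single_def)

definition nrm :: "(int \<Rightarrow> 'a \<Rightarrow> complex) \<Rightarrow> real" where
  "nrm a = (\<Sum>\<^sub>\<infinity>k. supn (a k))"

context dyn begin

lemma normal: "normal_space (euclidean :: 'a topology)"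
proof (rule compact_Hausdorff_or_regular_imp_normal_space)
  show "compact_space (euclidean :: 'a topology)" using cpt by (simp add: compact_space_def)
  show "Hausdorff_space (euclidean :: 'a topology) \<or> regular_space (euclidean :: 'a topology)"
    unfolding Hausdorff_space_def disjnt_def by (metis hausdorff open_openin topspace_euclidean UNIV_I)
qed

lemma urysohn:
  assumes "closed S" "closed T" "S \<inter> T = {}"
  obtains f :: "'a \<Rightarrow> real" where "continuous_on UNIV f" "\<And>x. 0 \<le> f x" "\<And>x. f x \<le> 1"
    "\<And>x. x \<in> S \<Longrightarrow> f x = 1" "\<And>x. x \<in> T \<Longrightarrow> f x = 0"
proof -
  obtain f where f: "continuous_map euclidean (top_of_set {0..1::real}) f" "f ` T \<subseteq> {0}" "f ` S \<subseteq> {1}"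
    using Urysohn_lemma[OF normal, of T S 0 1] assms by (auto simp: disjnt_def)
  have "continuous_on UNIV f" "\<And>x. f x \<in> {0..1}"
    using f(1) by (auto simp: continuous_map_in_subtopology)
  then show ?thesis using that[of f] f(2,3) by (auto simp: image_subset_iff)
qed

lemma separate: fixes x y :: 'a assumes "x \<noteq> y" obtains f :: "'a \<Rightarrow> complex" where "continuous_on UNIV f" "f x \<noteq> f y"
proof -
  have cl: "closed {x}" "closed {y}" "{x} \<inter> {y} = {}" using assms by auto
  obtain g :: "'a \<Rightarrow> real" where g: "continuous_on UNIV g" "\<And>z. 0 \<le> g z" "\<And>z. g z \<le> 1" "\<And>z. z \<in> {x} \<Longrightarrow> g z = 1" "\<And>z. z \<in> {y} \<Longrightarrow> g z = 0"
    by (rule urysohn[OF cl]) blast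
  have "continuous_on UNIV (\<lambda>z. complex_of_real (g z))"
    by (intro continuous_intros g)
  moreover have "complex_of_real (g x) \<noteq> complex_of_real (g y)" using g by simp
  ultimately show ?thesis by (rule that)
qed

lemma mult_emb_right: "l1_mult \<sigma> a (emb f) n x = a n x * f (ipow \<sigma> (-n) x)"
  unfolding l1_mult_def by (subst infsum_single_nz[where kk=n]) (auto simp: emb_def)

lemma mult_emb_left: "l1_mult \<sigma> (emb f) a n x = f x * a n x"
  unfolding l1_mult_def by (subst infsum_single_nz[where kk=0]) (auto simp: emb_def)

lemma comm_iff: "a \<in> commutant \<sigma> \<longleftrightarrow> a \<in> l1 \<and> (\<forall>k x. a k x \<noteq> 0 \<longrightarrow> x \<in> Fix \<sigma> k)"
proof
  assume a: "a \<in> commutant \<sigma>"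
  then have l: "a \<in> l1" by (simp add: commutant_def)
  have "x \<in> Fix \<sigma> k" if nz: "a k x \<noteq> 0" for k x
  proof (rule ccontr)
    assume "x \<notin> Fix \<sigma> k"
    then have "x \<notin> Fix \<sigma> (-k)" by (simp add: Fix_neg)
    then have "ipow \<sigma> (-k) x \<noteq> x" by (simp add: Fix_def)
    then obtain f :: "'a \<Rightarrow> complex" where f: "continuous_on UNIV f" "f (ipow \<sigma> (-k) x) \<noteq> f x" by (rule separate)
    have "l1_mult \<sigma> a (emb f) k x = l1_mult \<sigma> (emb f) a k x"
      using a f(1) by (simp add: commutant_def)
    then have "a k x * f (ipow \<sigma> (-k) x) = f x * a k x"
      by (simp add: mult_emb_right mult_emb_left)
    with nz f(2) show False by simp
  qed
  with l show "a \<in> l1 \<and> (\<forall>k x. a k x \<noteq> 0 \<longrightarrow> x \<in> Fix \<sigma> k)" by blast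
next
  assume a: "a \<in> l1 \<and> (\<forall>k x. a k x \<noteq> 0 \<longrightarrow> x \<in> Fix \<sigma> k)"
  have "l1_mult \<sigma> a (emb f) = l1_mult \<sigma> (emb f) a" for f
  proof (intro ext)
    fix n x
    show "l1_mult \<sigma> a (emb f) n x = l1_mult \<sigma> (emb f) a n x"
    proof (cases "a n x = 0")
      case False
      then have "x \<in> Fix \<sigma> (-n)" using a Fix_neg by blast
      then show ?thesis by (simp add: mult_emb_right mult_emb_left Fix_def)
    qed (simp add: mult_emb_right mult_emb_left)
  qed
  with a show "a \<in> commutant \<sigma>" by (simp add: commutant_def)
qed

lemma commD: "a \<in> commutant \<sigma> \<Longrightarrow> a k x \<noteq> 0 \<Longrightarrow> x \<in> Fix \<sigma> k"
  by (simp add: comm_iff)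

lemma commD': "a \<in> commutant \<sigma> \<Longrightarrow> a k x \<noteq> 0 \<Longrightarrow> ipow \<sigma> (-k) x = x"
proof -
  assume "a \<in> commutant \<sigma>" "a k x \<noteq> 0"
  then have "x \<in> Fix \<sigma> (-k)" using commD Fix_neg by blast
  then show ?thesis by (simp add: Fix_def)
qed

lemma comm_cont: "a \<in> commutant \<sigma> \<Longrightarrow> continuous_on UNIV (a k)"
  by (simp add: commutant_def l1_def)

lemma comm_summ: "a \<in> commutant \<sigma> \<Longrightarrow> (\<lambda>k. supn (a k)) summable_on UNIV"
  by (simp add: commutant_def l1_def)

lemma comm_bound: "a \<in> commutant \<sigma> \<Longrightarrow> cmod (a k x) \<le> supn (a k)"
  by (rule supn_ge[OF comm_cont])

lemma comm_supn_nonneg: "a \<in> commutant \<sigma> \<Longrightarrow> 0 \<le> supn (a k)"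
  by (rule supn_nonneg[OF comm_cont])

lemma supn_le_nrm: "a \<in> commutant \<sigma> \<Longrightarrow> supn (a k) \<le> nrm a"
  unfolding nrm_def
  using infsum_mono_neutral[of "\<lambda>k'. if k' = k then supn (a k) else 0" "{k}" "\<lambda>k. supn (a k)" UNIV]
  by (auto simp: comm_summ comm_supn_nonneg)

lemma nrm_nonneg: "a \<in> commutant \<sigma> \<Longrightarrow> 0 \<le> nrm a"
  unfolding nrm_def by (simp add: infsum_nonneg comm_supn_nonneg)

lemma comm_pt_summ: "a \<in> commutant \<sigma> \<Longrightarrow> (\<lambda>k. norm (a k x)) summable_on UNIV"
  by (rule summable_on_comparison_test[OF comm_summ]) (auto simp: comm_bound)

lemma comm_pt_summ2: "a \<in> commutant \<sigma> \<Longrightarrow> (\<lambda>k. a k x) summable_on UNIV"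
  by (rule abs_summable_summable[OF comm_pt_summ])

lemma single_comm:
  assumes "continuous_on UNIV f" "\<And>x. f x \<noteq> 0 \<Longrightarrow> x \<in> Fix \<sigma> k"
  shows "single k f \<in> commutant \<sigma>"
  unfolding comm_iff l1_def
proof (intro conjI CollectI allI impI)
  fix n show "continuous_on UNIV (single k f n)" using assms by (simp add: single_def)
next
  show "(\<lambda>n. supn (single k f n)) summable_on UNIV"
    by (rule summable_single_nz[where kk=k]) (simp add: single_def)
next
  fix n x assume "single k f n x \<noteq> 0"
  then show "x \<in> Fix \<sigma> n" using assms by (auto simp: single_def split: if_splits)
qed

lemma emb_comm: "continuous_on UNIV f \<Longrightarrow> emb f \<in> commutant \<sigma>"
  by (simp add: emb_single single_comm)

lemma add_comm: assumes "a \<in> commutant \<sigma>" "b \<in> commutant \<sigma>"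
  shows "(\<lambda>n x. a n x + b n x) \<in> commutant \<sigma>"
  unfolding comm_iff l1_def
proof (intro conjI CollectI allI impI)
  fix n show "continuous_on UNIV (\<lambda>x. a n x + b n x)"
    using assms by (intro continuous_intros comm_cont)
next
  show "(\<lambda>n. supn (\<lambda>x. a n x + b n x)) summable_on UNIV"
  proof (rule summable_on_comparison_test[OF summable_on_add[OF comm_summ[OF assms(1)] comm_summ[OF assms(2)]]])
    fix n
    show "supn (\<lambda>x. a n x + b n x) \<le> supn (a n) + supn (b n)"
      by (rule supn_le) (meson add_mono assms comm_bound norm_triangle_le)
    show "0 \<le> supn (\<lambda>x. a n x + b n x)"
      using assms by (intro supn_nonneg continuous_intros comm_cont)
  qed
next
  fix n x assume "a n x + b n x \<noteq> 0"
  then have "a n x \<noteq> 0 \<or> b n x \<noteq> 0" by auto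
  then show "x \<in> Fix \<sigma> n" using assms commD by blast
qed

lemma smult_comm: assumes "a \<in> commutant \<sigma>"
  shows "(\<lambda>n x. c * a n x) \<in> commutant \<sigma>"
  unfolding comm_iff l1_def
proof (intro conjI CollectI allI impI)
  fix n show "continuous_on UNIV (\<lambda>x. c * a n x)"
    using assms by (intro continuous_intros comm_cont)
next
  show "(\<lambda>n. supn (\<lambda>x. c * a n x)) summable_on UNIV"
  proof (rule summable_on_comparison_test[OF summable_on_cmult_right[OF comm_summ[OF assms(1)], of "cmod c"]])
    fix n
    show "supn (\<lambda>x. c * a n x) \<le> cmod c * supn (a n)"
      by (rule supn_le) (simp add: norm_mult assms comm_bound mult_left_mono)
    show "0 \<le> supn (\<lambda>x. c * a n x)"
      using assms by (intro supn_nonneg continuous_intros comm_cont)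
  qed
next
  fix n x assume "c * a n x \<noteq> 0"
  then show "x \<in> Fix \<sigma> n" using assms commD by fastforce
qed

end


lemma infsum_compl:
  fixes M :: "'b \<Rightarrow> 'c::banach"
  assumes "M summable_on UNIV" "finite F"
  shows "infsum M (-F) = infsum M UNIV - sum M F"
proof -
  have "infsum M UNIV = infsum M (F \<union> -F)" by simp
  also have "\<dots> = infsum M F + infsum M (-F)"
    by (rule infsum_Un_disjoint) (auto intro: summable_on_subset_banach[OF assms(1)])
  finally show ?thesis using assms(2) by simp
qed

lemma tail_finite:
  fixes M :: "'b \<Rightarrow> real"
  assumes "M summable_on UNIV" "e > 0"
  shows "\<exists>F. finite F \<and> (\<forall>G. finite G \<and> F \<subseteq> G \<longrightarrow> \<bar>infsum M (-G)\<bar> < e)"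
proof -
  have "((\<lambda>F. sum M F) \<longlongrightarrow> infsum M UNIV) (finite_subsets_at_top UNIV)"
    by (rule infsum_tendsto[OF assms(1)])
  then have "\<forall>\<^sub>F F in finite_subsets_at_top UNIV. dist (sum M F) (infsum M UNIV) < e"
    using assms(2) tendsto_iff by blast
  then obtain X where X: "finite X" "\<forall>Y. finite Y \<and> X \<subseteq> Y \<longrightarrow> dist (sum M Y) (infsum M UNIV) < e"
    by (auto simp: eventually_finite_subsets_at_top)
  show ?thesis
  proof (intro exI[of _ X] conjI allI impI)
    fix G assume G: "finite G \<and> X \<subseteq> G"
    then show "\<bar>infsum M (-G)\<bar> < e"
      using X(2) infsum_compl[OF assms(1), of G] by (auto simp: dist_real_def abs_minus_commute)
  qed (use X in auto)
qed

lemma infsum_bound: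
  fixes f :: "'b \<Rightarrow> 'c::banach"
  assumes "M summable_on A" "\<And>k. k \<in> A \<Longrightarrow> norm (f k) \<le> M k"
  shows "f summable_on A" "norm (infsum f A) \<le> infsum M A"
proof -
  have "(\<lambda>k. norm (f k)) summable_on A"
    by (rule summable_on_comparison_test[OF assms(1)]) (use assms in auto)
  then show fs: "f summable_on A" by (rule abs_summable_summable)
  show "norm (infsum f A) \<le> infsum M A"
    by (rule norm_infsum_le[OF has_sum_infsum[OF fs] has_sum_infsum[OF assms(1)]]) (use assms in auto)
qed

lemma approx_cont:
  fixes f :: "'a::topological_space \<Rightarrow> 'c::metric_space"
  assumes "\<And>e. e > 0 \<Longrightarrow> \<exists>g. continuous_on UNIV g \<and> (\<forall>x. dist (g x) (f x) < e)"
  shows "continuous_on UNIV f"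
proof -
  define g where "g n = (SOME g. continuous_on UNIV g \<and> (\<forall>x. dist (g x) (f x) < 1 / Suc n))" for n :: nat
  have g: "continuous_on UNIV (g n) \<and> (\<forall>x. dist (g n x) (f x) < 1 / Suc n)" for n
  proof -
    have "\<exists>g. continuous_on UNIV g \<and> (\<forall>x. dist (g x) (f x) < 1 / Suc n)" by (rule assms) simp
    then show ?thesis unfolding g_def by (rule someI_ex)
  qed
  show ?thesis
  proof (rule uniform_limit_theorem[where f=g])
    show "\<forall>\<^sub>F n in sequentially. continuous_on UNIV (g n)" using g by simp
    show "uniform_limit UNIV g f sequentially"
    proof (rule uniform_limitI)
      fix e :: real assume e: "e > 0"
      obtain N :: nat where N: "1 / Suc N < e" using e
        by (metis nat_approx_posE)
      have "\<forall>n\<ge>N. \<forall>x\<in>UNIV. dist (g n x) (f x) < e"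
      proof (intro allI impI ballI)
        fix n x assume "N \<le> n"
        then have "1 / real (Suc n) \<le> 1 / Suc N" by (simp add: frac_le)
        moreover have "dist (g n x) (f x) < 1 / Suc n" using g[of n] by blast
        ultimately show "dist (g n x) (f x) < e" using N by linarith
      qed
      then show "\<forall>\<^sub>F n in sequentially. \<forall>x\<in>UNIV. dist (g n x) (f x) < e"
        by (simp add: eventually_sequentially) blast
    qed
  qed simp
qed

lemma cont_infsum:
  fixes t :: "'b \<Rightarrow> 'a::topological_space \<Rightarrow> complex"
  assumes "\<And>k. continuous_on UNIV (t k)" "M summable_on UNIV" "\<And>k x. norm (t k x) \<le> M k"
  shows "continuous_on UNIV (\<lambda>x. infsum (\<lambda>k. t k x) UNIV)"
proof (rule approx_cont)
  fix e :: real assume e: "e > 0"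
  obtain F where F: "finite F" "\<bar>infsum M (-F)\<bar> < e"
    using tail_finite[OF assms(2) e] by blast
  show "\<exists>g. continuous_on UNIV g \<and> (\<forall>x. dist (g x) (infsum (\<lambda>k. t k x) UNIV) < e)"
  proof (intro exI conjI allI)
    show "continuous_on UNIV (\<lambda>x. \<Sum>k\<in>F. t k x)" by (intro continuous_intros assms)
    fix x
    have s: "(\<lambda>k. t k x) summable_on UNIV" by (rule infsum_bound(1)[OF assms(2)]) (use assms in auto)
    have "dist (\<Sum>k\<in>F. t k x) (infsum (\<lambda>k. t k x) UNIV) = norm (infsum (\<lambda>k. t k x) (-F))"
      using infsum_compl[OF s F(1)] by (simp add: dist_norm norm_minus_commute)
    also have "\<dots> \<le> infsum M (-F)"
      by (rule infsum_bound(2)[OF summable_on_subset_banach[OF assms(2)]]) (use assms in auto)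
    finally show "dist (\<Sum>k\<in>F. t k x) (infsum (\<lambda>k. t k x) UNIV) < e" using F(2) by linarith
  qed
qed


lemma cauchy_int:
  fixes f g :: "int \<Rightarrow> 'c::{real_normed_field,banach}"
  assumes sf: "(\<lambda>k. norm (f k)) summable_on UNIV" and sg: "(\<lambda>k. norm (g k)) summable_on UNIV"
  shows "(\<lambda>(n,k). f k * g (n-k)) summable_on UNIV"
    and "(\<lambda>n. \<Sum>\<^sub>\<infinity>k. f k * g (n-k)) summable_on UNIV"
    and "(\<Sum>\<^sub>\<infinity>n. \<Sum>\<^sub>\<infinity>k. f k * g (n-k)) = (\<Sum>\<^sub>\<infinity>k. f k) * (\<Sum>\<^sub>\<infinity>m. g m)"
proof -
  define Sg where "Sg = (\<Sum>\<^sub>\<infinity>m. norm (g m))"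
  have "(\<lambda>(k,m). norm (f k) * norm (g m)) summable_on Sigma UNIV (\<lambda>_. UNIV)"
  proof (rule summable_on_SigmaI[where g="\<lambda>k. norm (f k) * Sg"])
    fix k :: int
    show "((\<lambda>m. case (k, m) of (k, m) \<Rightarrow> norm (f k) * norm (g m)) has_sum norm (f k) * Sg) UNIV"
      unfolding Sg_def using has_sum_cmult_right[OF has_sum_infsum[OF sg]] by simp
  next
    show "(\<lambda>k. norm (f k) * Sg) summable_on UNIV" by (rule summable_on_cmult_left[OF sf])
  qed auto
  then have "(\<lambda>p. norm (f (fst p) * g (snd p))) summable_on UNIV"
    by (simp add: norm_mult case_prod_unfold)
  then have P: "(\<lambda>p. f (fst p) * g (snd p)) summable_on UNIV" by (rule abs_summable_summable)
  have bij: "bij_betw (\<lambda>(n,k). (k, n-k)) (UNIV::(int\<times>int) set) UNIV"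
    by (rule bij_betw_byWitness[where f'="\<lambda>(k,m). (k+m, k)"]) (simp_all add: case_prod_unfold image_subset_iff)
  have "(\<lambda>p. (\<lambda>p. f (fst p) * g (snd p)) ((\<lambda>(n,k). (k, n-k)) p)) summable_on UNIV"
    by (subst summable_on_reindex_bij_betw[OF bij]) (rule P)
  then show S: "(\<lambda>(n,k). f k * g (n-k)) summable_on UNIV" by (simp add: case_prod_unfold)
  then have S': "(\<lambda>(n,k). f k * g (n-k)) summable_on Sigma UNIV (\<lambda>_. UNIV)" by simp
  show "(\<lambda>n. \<Sum>\<^sub>\<infinity>k. f k * g (n-k)) summable_on UNIV"
    using summable_on_Sigma_banach[OF S'] by simp
  have "(\<Sum>\<^sub>\<infinity>n. \<Sum>\<^sub>\<infinity>k. f k * g (n-k)) = infsum (\<lambda>(n,k). f k * g (n-k)) UNIV"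
    using infsum_Sigma'_banach[OF S'] by simp
  also have "\<dots> = infsum (\<lambda>p. (\<lambda>p. f (fst p) * g (snd p)) ((\<lambda>(n,k). (k, n-k)) p)) UNIV"
    by (simp add: case_prod_unfold)
  also have "\<dots> = infsum (\<lambda>p. f (fst p) * g (snd p)) UNIV"
    by (rule infsum_reindex_bij_betw[OF bij])
  also have "\<dots> = (\<Sum>\<^sub>\<infinity>k. \<Sum>\<^sub>\<infinity>m. f k * g m)"
  proof -
    have P': "(\<lambda>(k,m). f k * g m) summable_on Sigma UNIV (\<lambda>_. UNIV)" using P by (simp add: case_prod_unfold)
    show ?thesis using infsum_Sigma'_banach[OF P'] by (simp add: case_prod_unfold)
  qed
  also have "\<dots> = (\<Sum>\<^sub>\<infinity>k. f k * (\<Sum>\<^sub>\<infinity>m. g m))"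
    by (rule infsum_cong) (rule infsum_cmult_right, rule abs_summable_summable[OF sg])
  also have "\<dots> = (\<Sum>\<^sub>\<infinity>k. f k) * (\<Sum>\<^sub>\<infinity>m. g m)"
    by (rule infsum_cmult_left) (rule abs_summable_summable[OF sf])
  finally show "(\<Sum>\<^sub>\<infinity>n. \<Sum>\<^sub>\<infinity>k. f k * g (n-k)) = (\<Sum>\<^sub>\<infinity>k. f k) * (\<Sum>\<^sub>\<infinity>m. g m)" .
qed


context dyn begin

lemma mult_pt: assumes "a \<in> commutant \<sigma>" "b \<in> commutant \<sigma>"
  shows "l1_mult \<sigma> a b n x = (\<Sum>\<^sub>\<infinity>k. a k x * b (n-k) x)"
  unfolding l1_mult_def
proof (rule infsum_cong)
  fix k show "a k x * b (n - k) (ipow \<sigma> (- k) x) = a k x * b (n - k) x"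
    using commD'[OF assms(1), of k x] by (cases "a k x = 0") auto
qed

lemma supn_nrm_summ: "a \<in> commutant \<sigma> \<Longrightarrow> (\<lambda>k. norm (supn (a k))) summable_on UNIV"
  using comm_summ[of a] comm_supn_nonneg[of a] by simp

lemma mult_comm: assumes a: "a \<in> commutant \<sigma>" and b: "b \<in> commutant \<sigma>"
  shows "l1_mult \<sigma> a b \<in> commutant \<sigma>" "nrm (l1_mult \<sigma> a b) \<le> nrm a * nrm b"
proof -
  define c where "c n = (\<Sum>\<^sub>\<infinity>k. supn (a k) * supn (b (n-k)))" for n
  have cs: "c summable_on UNIV" unfolding c_def
    by (rule cauchy_int(2)[OF supn_nrm_summ[OF a] supn_nrm_summ[OF b]])
  have csum: "infsum c UNIV = nrm a * nrm b" unfolding c_def nrm_def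
    by (rule cauchy_int(3)[OF supn_nrm_summ[OF a] supn_nrm_summ[OF b]])
  have cn: "0 \<le> c n" for n unfolding c_def
    by (intro infsum_nonneg mult_nonneg_nonneg comm_supn_nonneg a b)
  have Ms: "(\<lambda>k. supn (a k) * supn (b (n-k))) summable_on UNIV" for n
  proof (rule summable_on_comparison_test[OF summable_on_cmult_left[OF comm_summ[OF a], of "nrm b"]])
    fix k show "supn (a k) * supn (b (n - k)) \<le> supn (a k) * nrm b"
      by (intro mult_left_mono supn_le_nrm b comm_supn_nonneg a)
    show "0 \<le> supn (a k) * supn (b (n - k))" by (intro mult_nonneg_nonneg comm_supn_nonneg a b)
  qed
  have tb: "norm (a k x * b (n-k) (ipow \<sigma> (-k) x)) \<le> supn (a k) * supn (b (n-k))" for n k x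
    unfolding norm_mult by (intro mult_mono comm_bound a b comm_supn_nonneg) auto
  have pt: "cmod (l1_mult \<sigma> a b n x) \<le> c n" for n x
    unfolding l1_mult_def c_def by (rule infsum_bound(2)[OF Ms tb])
  have cont: "continuous_on UNIV (l1_mult \<sigma> a b n)" for n
  proof -
    have "continuous_on UNIV (\<lambda>x. \<Sum>\<^sub>\<infinity>k. a k x * b (n-k) (ipow \<sigma> (-k) x))"
      by (rule cont_infsum[OF _ Ms tb]) (intro continuous_intros comm_cont a b ipow_cont_app)
    then show ?thesis unfolding l1_mult_def by simp
  qed
  have sle: "supn (l1_mult \<sigma> a b n) \<le> c n" for n by (rule supn_le[OF pt])
  have ssum: "(\<lambda>n. supn (l1_mult \<sigma> a b n)) summable_on UNIV"
    by (rule summable_on_comparison_test[OF cs sle]) (rule supn_nonneg[OF cont])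
  have supp: "x \<in> Fix \<sigma> n" if nz: "l1_mult \<sigma> a b n x \<noteq> 0" for n x
  proof -
    have "\<exists>k. a k x * b (n-k) x \<noteq> 0"
    proof (rule ccontr)
      assume "\<not> ?thesis"
      then have "l1_mult \<sigma> a b n x = (\<Sum>\<^sub>\<infinity>k::int. 0)"
        unfolding mult_pt[OF a b] by (intro infsum_cong) auto
      with nz show False by simp
    qed
    then obtain k where "a k x \<noteq> 0" "b (n-k) x \<noteq> 0" by auto
    then have "x \<in> Fix \<sigma> k" "x \<in> Fix \<sigma> (n-k)" using commD a b by auto
    from Fix_add[OF this] show ?thesis by simp
  qed
  show "l1_mult \<sigma> a b \<in> commutant \<sigma>"
    unfolding comm_iff l1_def using cont ssum supp by blast
  show "nrm (l1_mult \<sigma> a b) \<le> nrm a * nrm b"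
  proof -
    have "nrm (l1_mult \<sigma> a b) \<le> infsum c UNIV" unfolding nrm_def by (rule infsum_mono[OF ssum cs sle])
    then show ?thesis using csum by simp
  qed
qed

definition e :: "int \<Rightarrow> 'a \<Rightarrow> complex" where "e = emb (\<lambda>_. 1)"

lemma e_comm: "e \<in> commutant \<sigma>" unfolding e_def by (rule emb_comm) simp

lemma e_left: "l1_mult \<sigma> e a = a"
  by (simp add: e_def mult_emb_left fun_eq_iff)

lemma e_right: "a \<in> commutant \<sigma> \<Longrightarrow> l1_mult \<sigma> a e = a"
  by (simp add: e_def mult_emb_right fun_eq_iff)

lemma mult_single: assumes "single k f \<in> commutant \<sigma>" "single m h \<in> commutant \<sigma>"
  shows "l1_mult \<sigma> (single k f) (single m h) = single (k+m) (\<lambda>x. f x * h x)"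
proof (intro ext)
  fix n x
  have "l1_mult \<sigma> (single k f) (single m h) n x = (\<Sum>\<^sub>\<infinity>j. single k f j x * single m h (n-j) x)"
    by (rule mult_pt[OF assms])
  also have "\<dots> = single k f k x * single m h (n-k) x"
    by (rule infsum_single_nz) (simp add: single_def)
  also have "\<dots> = single (k+m) (\<lambda>x. f x * h x) n x"
    by (auto simp: single_def)
  finally show "l1_mult \<sigma> (single k f) (single m h) n x = single (k+m) (\<lambda>x. f x * h x) n x" .
qed

lemma nrm_single: "continuous_on UNIV f \<Longrightarrow> nrm (single k f) = supn f"
  unfolding nrm_def by (subst infsum_single_nz[where kk=k]) (auto simp: single_def)

lemma nrm_smult: assumes "a \<in> commutant \<sigma>" shows "nrm (\<lambda>n x. c * a n x) = cmod c * nrm a"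
proof -
  have "supn (\<lambda>x. c * a n x) = cmod c * supn (a n)" for n
  proof (cases "c = 0")
    case False
    show ?thesis
    proof (rule antisym)
      show "supn (\<lambda>x. c * a n x) \<le> cmod c * supn (a n)"
        by (rule supn_le) (simp add: norm_mult comm_bound[OF assms] mult_left_mono)
      have "supn (a n) \<le> supn (\<lambda>x. c * a n x) / cmod c"
      proof (rule supn_le)
        fix x
        have "cmod (c * a n x) \<le> supn (\<lambda>x. c * a n x)"
          by (rule supn_ge) (intro continuous_intros comm_cont assms)
        then show "cmod (a n x) \<le> supn (\<lambda>x. c * a n x) / cmod c"
          using False by (simp add: norm_mult field_simps)
      qed
      then show "cmod c * supn (a n) \<le> supn (\<lambda>x. c * a n x)"
        using False by (simp add: field_simps)
    qed
  qed (simp)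
  then show ?thesis unfolding nrm_def by (simp add: infsum_cmult_right')
qed

end


lemma norm_powi1: "cmod c = 1 \<Longrightarrow> cmod (c powi j) = 1"
  by (simp add: norm_power_int)

lemma cauchy_inner:
  fixes f g :: "int \<Rightarrow> complex"
  assumes sf: "(\<lambda>k. norm (f k)) summable_on UNIV" and sg: "(\<lambda>k. norm (g k)) summable_on UNIV"
  shows "(\<lambda>k. f k * g (n-k)) summable_on UNIV"
proof -
  have "(\<lambda>(n,k). f k * g (n-k)) summable_on Sigma UNIV (\<lambda>_. UNIV)"
    using cauchy_int(1)[OF sf sg] by simp
  from summable_on_SigmaD1[where f="\<lambda>n k. f k * g (n-k)", OF this, of n] show ?thesis by simp
qed

context dyn begin

lemma min_period_Per: assumes "x \<in> interior (Per \<sigma> q)"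
  shows "min_int_period \<sigma> x = q" "1 \<le> q"
proof -
  have xP: "x \<in> Per \<sigma> q" using assms interior_subset by blast
  then show q1: "1 \<le> q" by (simp add: Per_def)
  have "interior (Per \<sigma> q) \<subseteq> interior (Fix \<sigma> (int q))"
    by (rule interior_mono) (auto simp: Per_def Fix_def)
  with assms have xF: "x \<in> interior (Fix \<sigma> (int q))" by blast
  show "min_int_period \<sigma> x = q"
    unfolding min_int_period_def
  proof (rule Least_equality)
    show "1 \<le> q \<and> x \<in> interior (Fix \<sigma> (int q))" using q1 xF by simp
    fix m assume m: "1 \<le> m \<and> x \<in> interior (Fix \<sigma> (int m))"
    show "q \<le> m"
    proof (rule ccontr)
      assume "\<not> q \<le> m"
      moreover have "x \<in> Fix \<sigma> (int m)" using m interior_subset by blast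
      ultimately show False using xP m by (auto simp: Per_def Fix_def)
    qed
  qed
qed

lemma Per_comm_dvd: "x \<in> Per \<sigma> q \<Longrightarrow> a \<in> commutant \<sigma> \<Longrightarrow> a k x \<noteq> 0 \<Longrightarrow> int q dvd k"
  using Per_dvd commD by blast

lemma summ_sub: assumes "a \<in> commutant \<sigma>" "1 \<le> q"
  shows "(\<lambda>j. norm (a (j * int q) x)) summable_on UNIV"
proof -
  have inj: "inj_on (\<lambda>j. j * int q) UNIV" using assms(2) by (auto simp: inj_on_def)
  have "(\<lambda>k. norm (a k x)) summable_on range (\<lambda>j. j * int q)"
    by (rule summable_on_subset_banach[OF comm_pt_summ[OF assms(1)]]) simp
  then show ?thesis by (subst (asm) summable_on_reindex[OF inj]) (simp add: o_def)
qed

lemma summ_sub_c: assumes "a \<in> commutant \<sigma>" "1 \<le> q" "cmod c = 1"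
  shows "(\<lambda>j. norm (a (j * int q) x * c powi j)) summable_on UNIV"
  using summ_sub[OF assms(1,2)] by (simp add: norm_mult norm_powi1[OF assms(3)])

lemma summ_sub_c': assumes "a \<in> commutant \<sigma>" "1 \<le> q" "cmod c = 1"
  shows "(\<lambda>j. a (j * int q) x * c powi j) summable_on UNIV"
  by (rule abs_summable_summable[OF summ_sub_c[OF assms]])

lemma omega_x_char: assumes "x \<in> Aper \<sigma>" shows "omega_x \<sigma> x \<in> characters \<sigma>"
proof -
  have z: "a k x = 0" if "a \<in> commutant \<sigma>" "k \<noteq> 0" for a k
    using that commD Aper_Fix[OF assms] by blast
  show ?thesis unfolding characters_def
  proof (intro CollectI conjI ballI allI)
    show "omega_x \<sigma> x \<in> extensional (commutant \<sigma>)" by (simp add: omega_x_def)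
  next
    fix a b assume a: "a \<in> commutant \<sigma>" and b: "b \<in> commutant \<sigma>"
    show "omega_x \<sigma> x (\<lambda>n x. a n x + b n x) = omega_x \<sigma> x a + omega_x \<sigma> x b"
      using a b add_comm[OF a b] by (simp add: omega_x_def)
    have "l1_mult \<sigma> a b 0 x = a 0 x * b 0 x"
      unfolding mult_pt[OF a b] by (subst infsum_single_nz[where kk=0]) (auto simp: z[OF a])
    then show "omega_x \<sigma> x (l1_mult \<sigma> a b) = omega_x \<sigma> x a * omega_x \<sigma> x b"
      using a b mult_comm(1)[OF a b] by (simp add: omega_x_def)
  next
    fix a c assume a: "a \<in> commutant \<sigma>"
    show "omega_x \<sigma> x (\<lambda>n x. c * a n x) = c * omega_x \<sigma> x a"
      using a smult_comm[OF a] by (simp add: omega_x_def)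
  next
    show "\<exists>a\<in>commutant \<sigma>. omega_x \<sigma> x a \<noteq> 0"
    proof (rule bexI[OF _ e_comm])
      have "omega_x \<sigma> x e = e 0 x" using e_comm by (simp add: omega_x_def)
      then show "omega_x \<sigma> x e \<noteq> 0" by (simp add: e_def emb_def)
    qed
  qed
qed

lemma omega_xc_char: assumes x: "x \<in> interior (Per \<sigma> q)" and c: "cmod c = 1"
  shows "omega_xc \<sigma> x c \<in> characters \<sigma>"
proof -
  note mp = min_period_Per[OF x]
  have xP: "x \<in> Per \<sigma> q" using x interior_subset by blast
  have c0: "c \<noteq> 0" using c by auto
  have ev: "omega_xc \<sigma> x c a = (\<Sum>\<^sub>\<infinity>j. a (j * int q) x * c powi j)" if "a \<in> commutant \<sigma>" for a
    using that by (simp add: omega_xc_def mp)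
  show ?thesis unfolding characters_def
  proof (intro CollectI conjI ballI allI)
    show "omega_xc \<sigma> x c \<in> extensional (commutant \<sigma>)" by (simp add: omega_xc_def)
  next
    fix a b assume a: "a \<in> commutant \<sigma>" and b: "b \<in> commutant \<sigma>"
    have "(\<Sum>\<^sub>\<infinity>j. (a (j * int q) x + b (j * int q) x) * c powi j)
        = (\<Sum>\<^sub>\<infinity>j. a (j * int q) x * c powi j + b (j * int q) x * c powi j)"
      by (simp add: distrib_right)
    also have "\<dots> = (\<Sum>\<^sub>\<infinity>j. a (j * int q) x * c powi j) + (\<Sum>\<^sub>\<infinity>j. b (j * int q) x * c powi j)"
      by (rule infsum_add) (intro summ_sub_c' a b mp c)+
    finally show "omega_xc \<sigma> x c (\<lambda>n x. a n x + b n x) = omega_xc \<sigma> x c a + omega_xc \<sigma> x c b"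
      using ev[OF add_comm[OF a b]] ev[OF a] ev[OF b] by simp
    define A where "A i = a (i * int q) x" for i
    define B where "B i = b (i * int q) x" for i
    have inj: "inj_on (\<lambda>i. i * int q) UNIV" using mp(2) by (auto simp: inj_on_def)
    have inner: "(\<Sum>\<^sub>\<infinity>k. a k x * b (j * int q - k) x) = (\<Sum>\<^sub>\<infinity>i. A i * B (j - i))" for j
    proof -
      have "(\<Sum>\<^sub>\<infinity>k. a k x * b (j * int q - k) x) = (\<Sum>\<^sub>\<infinity>k\<in>range (\<lambda>i. i * int q). a k x * b (j * int q - k) x)"
      proof (rule infsum_cong_neutral)
        fix k assume "k \<in> UNIV - range (\<lambda>i. i * int q)"
        then have "\<not> int q dvd k" by (auto simp: dvd_def mult.commute)
        then show "a k x * b (j * int q - k) x = 0" using Per_comm_dvd[OF xP a] by auto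
      qed auto
      also have "\<dots> = (\<Sum>\<^sub>\<infinity>i. a (i * int q) x * b (j * int q - i * int q) x)"
        by (subst infsum_reindex[OF inj]) (simp add: o_def)
      also have "\<dots> = (\<Sum>\<^sub>\<infinity>i. A i * B (j - i))"
        by (simp add: A_def B_def left_diff_distrib)
      finally show ?thesis .
    qed
    have sA: "(\<lambda>i. norm (A i * c powi i)) summable_on UNIV" unfolding A_def by (rule summ_sub_c[OF a mp(2) c])
    have sB: "(\<lambda>i. norm (B i * c powi i)) summable_on UNIV" unfolding B_def by (rule summ_sub_c[OF b mp(2) c])
    have "omega_xc \<sigma> x c (l1_mult \<sigma> a b) = (\<Sum>\<^sub>\<infinity>j. (\<Sum>\<^sub>\<infinity>i. A i * B (j - i)) * c powi j)"
      using ev[OF mult_comm(1)[OF a b]] by (simp add: mult_pt[OF a b] inner)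
    also have "\<dots> = (\<Sum>\<^sub>\<infinity>j. \<Sum>\<^sub>\<infinity>i. (A i * c powi i) * (B (j - i) * c powi (j - i)))"
    proof (rule infsum_cong)
      fix j
      have "(\<Sum>\<^sub>\<infinity>i. A i * B (j - i)) * c powi j = (\<Sum>\<^sub>\<infinity>i. A i * B (j - i) * c powi j)"
      proof -
        have sAB: "(\<lambda>i. A i * B (j - i)) summable_on UNIV" unfolding A_def B_def
          by (rule cauchy_inner) (rule summ_sub[OF a mp(2)], rule summ_sub[OF b mp(2)])
        show ?thesis by (rule infsum_cmult_left[symmetric]) (rule sAB)
      qed
      also have "\<dots> = (\<Sum>\<^sub>\<infinity>i. (A i * c powi i) * (B (j - i) * c powi (j - i)))"
      proof (rule infsum_cong)
        fix i
        have "c powi j = c powi i * c powi (j - i)" using power_int_add[of c i "j-i"] c0 by simp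
        then show "A i * B (j - i) * c powi j = A i * c powi i * (B (j - i) * c powi (j - i))"
          by (simp add: ac_simps)
      qed
      finally show "(\<Sum>\<^sub>\<infinity>i. A i * B (j - i)) * c powi j = (\<Sum>\<^sub>\<infinity>i. (A i * c powi i) * (B (j - i) * c powi (j - i)))" .
    qed
    also have "\<dots> = (\<Sum>\<^sub>\<infinity>i. A i * c powi i) * (\<Sum>\<^sub>\<infinity>m. B m * c powi m)"
      by (rule cauchy_int(3)[OF sA sB])
    also have "\<dots> = omega_xc \<sigma> x c a * omega_xc \<sigma> x c b"
      using ev[OF a] ev[OF b] by (simp add: A_def B_def)
    finally show "omega_xc \<sigma> x c (l1_mult \<sigma> a b) = omega_xc \<sigma> x c a * omega_xc \<sigma> x c b" .
  next
    fix a d assume a: "a \<in> commutant \<sigma>"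
    have "(\<Sum>\<^sub>\<infinity>j. d * a (j * int q) x * c powi j) = d * (\<Sum>\<^sub>\<infinity>j. a (j * int q) x * c powi j)"
      by (subst infsum_cmult_right[symmetric]) (intro summ_sub_c' a mp c, simp add: ac_simps)
    then show "omega_xc \<sigma> x c (\<lambda>n x. d * a n x) = d * omega_xc \<sigma> x c a"
      using ev[OF a] ev[OF smult_comm[OF a]] by simp
  next
    have "omega_xc \<sigma> x c e = 1"
    proof -
      have "omega_xc \<sigma> x c e = e (0 * int q) x * c powi 0"
        unfolding ev[OF e_comm] by (rule infsum_single_nz) (use mp(2) in \<open>simp add: e_def emb_def\<close>)
      then show ?thesis by (simp add: e_def emb_def)
    qed
    then show "\<exists>a\<in>commutant \<sigma>. omega_xc \<sigma> x c a \<noteq> 0" using e_comm by force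
  qed
qed

end


context dyn begin

lemma emb_add: "emb (\<lambda>y. g y + k y) = (\<lambda>n z. emb g n z + emb k n z)"
  by (auto simp: emb_def fun_eq_iff)

lemma emb_mult: "l1_mult \<sigma> (emb g) (emb k) = emb (\<lambda>y. g y * k y)"
  unfolding fun_eq_iff mult_emb_left by (simp add: emb_def)

lemma emb_smult: "emb (\<lambda>y. c * g y) = (\<lambda>n z. c * emb g n z)"
  by (auto simp: emb_def fun_eq_iff)

context
  fixes \<phi> assumes phi: "\<phi> \<in> characters \<sigma>"
begin

lemma ch_add: "a \<in> commutant \<sigma> \<Longrightarrow> b \<in> commutant \<sigma> \<Longrightarrow> \<phi> (\<lambda>n x. a n x + b n x) = \<phi> a + \<phi> b"
  using phi by (simp add: characters_def)

lemma ch_smult: "a \<in> commutant \<sigma> \<Longrightarrow> \<phi> (\<lambda>n x. c * a n x) = c * \<phi> a"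
  using phi by (simp add: characters_def)

lemma ch_mult: "a \<in> commutant \<sigma> \<Longrightarrow> b \<in> commutant \<sigma> \<Longrightarrow> \<phi> (l1_mult \<sigma> a b) = \<phi> a * \<phi> b"
  using phi by (simp add: characters_def)

lemma ch_e: "\<phi> e = 1"
proof -
  obtain a where a: "a \<in> commutant \<sigma>" "\<phi> a \<noteq> 0" using phi by (auto simp: characters_def)
  have "\<phi> a = \<phi> e * \<phi> a" using ch_mult[OF e_comm a(1)] by (simp add: e_left)
  with a(2) show ?thesis by simp
qed

lemma ch_diff: assumes "a \<in> commutant \<sigma>" "b \<in> commutant \<sigma>"
  shows "\<phi> (\<lambda>n x. a n x - b n x) = \<phi> a - \<phi> b"
proof -
  have "\<phi> (\<lambda>n x. a n x + (-1) * b n x) = \<phi> a + \<phi> (\<lambda>n x. (-1) * b n x)"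
    by (rule ch_add[OF assms(1) smult_comm[OF assms(2)]])
  also have "\<phi> (\<lambda>n x. (-1) * b n x) = (-1) * \<phi> b" by (rule ch_smult[OF assms(2)])
  finally have X: "\<phi> (\<lambda>n x. a n x + (-1) * b n x) = \<phi> a - \<phi> b" by simp
  then show ?thesis by simp
qed

lemma sum_comm: assumes "finite F" "\<And>i. i \<in> F \<Longrightarrow> g i \<in> commutant \<sigma>"
  shows "(\<lambda>n x. \<Sum>i\<in>F. g i n x) \<in> commutant \<sigma>" "\<phi> (\<lambda>n x. \<Sum>i\<in>F. g i n x) = (\<Sum>i\<in>F. \<phi> (g i))"
proof -
  have "(\<lambda>n x. \<Sum>i\<in>F. g i n x) \<in> commutant \<sigma> \<and> \<phi> (\<lambda>n x. \<Sum>i\<in>F. g i n x) = (\<Sum>i\<in>F. \<phi> (g i))"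
    using assms
  proof (induction F rule: finite_induct)
    case empty
    have z: "(\<lambda>n x. \<Sum>i\<in>{}. g i n x) = (\<lambda>n x. 0 * e n x)" by simp
    show ?case unfolding z using smult_comm[OF e_comm, of 0] ch_smult[OF e_comm, of 0] by simp
  next
    case (insert j F)
    then have gj: "g j \<in> commutant \<sigma>" and IH: "(\<lambda>n x. \<Sum>i\<in>F. g i n x) \<in> commutant \<sigma> \<and> \<phi> (\<lambda>n x. \<Sum>i\<in>F. g i n x) = (\<Sum>i\<in>F. \<phi> (g i))"
      by auto
    have eq: "(\<lambda>n x. \<Sum>i\<in>insert j F. g i n x) = (\<lambda>n x. g j n x + (\<lambda>n x. \<Sum>i\<in>F. g i n x) n x)"
      using insert(1,2) by simp
    show ?case unfolding eq using add_comm[OF gj IH[THEN conjunct1]] ch_add[OF gj IH[THEN conjunct1]] IH insert(1,2)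
      by simp
  qed
  then show "(\<lambda>n x. \<Sum>i\<in>F. g i n x) \<in> commutant \<sigma>" "\<phi> (\<lambda>n x. \<Sum>i\<in>F. g i n x) = (\<Sum>i\<in>F. \<phi> (g i))" by auto
qed

lemma ch_point: "\<exists>x0. \<forall>f. continuous_on UNIV f \<longrightarrow> \<phi> (emb f) = f x0"
proof (rule ccontr)
  assume "\<not> ?thesis"
  then have "\<forall>x. \<exists>h. continuous_on UNIV h \<and> \<phi> (emb h) = 0 \<and> h x \<noteq> 0"
  proof (intro allI)
    fix x
    assume "\<not> (\<exists>x0. \<forall>f. continuous_on UNIV f \<longrightarrow> \<phi> (emb f) = f x0)"
    then obtain f where f: "continuous_on UNIV f" "\<phi> (emb f) \<noteq> f x" by blast
    define h where "h y = f y - \<phi> (emb f) * 1" for y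
    have "continuous_on UNIV h" unfolding h_def by (intro continuous_intros f)
    moreover have "emb h = (\<lambda>n x. emb f n x - (\<lambda>n x. \<phi> (emb f) * e n x) n x)"
      by (auto simp: h_def emb_def e_def fun_eq_iff)
    then have "\<phi> (emb h) = 0"
      using ch_diff[OF emb_comm[OF f(1)] smult_comm[OF e_comm]] ch_smult[OF e_comm] ch_e by simp
    moreover have "h x \<noteq> 0" using f(2) by (simp add: h_def)
    ultimately show "\<exists>h. continuous_on UNIV h \<and> \<phi> (emb h) = 0 \<and> h x \<noteq> 0" by blast
  qed
  then obtain h where h: "\<And>x. continuous_on UNIV (h x)" "\<And>x. \<phi> (emb (h x)) = 0" "\<And>x. h x x \<noteq> 0"
    by metis
  have "compact (UNIV::'a set)" by (rule cpt)
  moreover have "\<And>x. x \<in> UNIV \<Longrightarrow> open ((\<lambda>x. h x -` (-{0})) x)"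
    using h(1) by (auto intro!: open_vimage)
  moreover have "UNIV \<subseteq> (\<Union>x\<in>UNIV. (\<lambda>x. h x -` (-{0})) x)" using h(3) by auto
  ultimately obtain F where F: "finite F" "UNIV \<subseteq> (\<Union>x\<in>F. h x -` (-{0}))"
    by (rule compactE_image) blast
  define H where "H y = (\<Sum>x\<in>F. h x y * cnj (h x y))" for y
  have cH: "continuous_on UNIV H" unfolding H_def by (intro continuous_intros h(1))
  have Hnz: "H y \<noteq> 0" for y
  proof -
    obtain x where x: "x \<in> F" "h x y \<noteq> 0" using F(2) by blast
    have "H y = (\<Sum>x\<in>F. of_real ((cmod (h x y))^2))" by (simp only: H_def complex_norm_square)
    then have "H y = of_real (\<Sum>x\<in>F. (cmod (h x y))^2)" by (simp only: of_real_sum)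
    moreover have "(\<Sum>x\<in>F. (cmod (h x y))^2) > 0"
      by (rule sum_pos2[OF F(1) x(1)]) (use x in auto)
    ultimately show ?thesis by (simp only: of_real_eq_0_iff)
  qed
  have "\<phi> (emb H) = 0"
  proof -
    have ce: "emb (\<lambda>y. h x y * cnj (h x y)) \<in> commutant \<sigma>" for x
      by (intro emb_comm continuous_intros h(1))
    have "emb H = (\<lambda>n z. \<Sum>x\<in>F. emb (\<lambda>y. h x y * cnj (h x y)) n z)"
      by (auto simp: emb_def H_def fun_eq_iff)
    then have "\<phi> (emb H) = (\<Sum>x\<in>F. \<phi> (emb (\<lambda>y. h x y * cnj (h x y))))"
      using sum_comm(2)[OF F(1) ce] by simp
    also have "\<dots> = 0"
    proof (rule sum.neutral, intro ballI)
      fix x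
      have "\<phi> (emb (\<lambda>y. h x y * cnj (h x y))) = \<phi> (emb (h x)) * \<phi> (emb (\<lambda>y. cnj (h x y)))"
        using ch_mult[OF emb_comm[OF h(1)] emb_comm[of "\<lambda>y. cnj (h x y)"]] emb_mult
        by (simp add: continuous_on_cnj h(1))
      then show "\<phi> (emb (\<lambda>y. h x y * cnj (h x y))) = 0" by (simp add: h(2))
    qed
    finally show ?thesis .
  qed
  moreover have "\<phi> (emb H) * \<phi> (emb (\<lambda>y. 1 / H y)) = 1"
  proof -
    have c2: "continuous_on UNIV (\<lambda>y. 1 / H y)" by (intro continuous_intros cH) (simp add: Hnz)
    have "l1_mult \<sigma> (emb H) (emb (\<lambda>y. 1 / H y)) = e"
      using Hnz by (simp add: emb_mult e_def)
    then show ?thesis using ch_mult[OF emb_comm[OF cH] emb_comm[OF c2]] ch_e by simp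
  qed
  ultimately show False by simp
qed

end
end


lemma prod_summ:
  fixes u :: "'i \<Rightarrow> real" and v :: "'j \<Rightarrow> real"
  assumes "u summable_on UNIV" "v summable_on UNIV" "\<And>i. 0 \<le> u i" "\<And>j. 0 \<le> v j"
  shows "(\<lambda>(i,j). u i * v j) summable_on UNIV"
proof -
  have "(\<lambda>(i,j). u i * v j) summable_on Sigma UNIV (\<lambda>_. UNIV)"
  proof (rule summable_on_SigmaI[where g="\<lambda>i. u i * infsum v UNIV"])
    fix i :: 'i
    show "((\<lambda>j. case (i, j) of (i, j) \<Rightarrow> u i * v j) has_sum u i * infsum v UNIV) UNIV"
      using has_sum_cmult_right[OF has_sum_infsum[OF assms(2)]] by simp
    show "(\<lambda>i. u i * infsum v UNIV) summable_on UNIV" by (rule summable_on_cmult_left[OF assms(1)])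
  qed (use assms in auto)
  then show ?thesis by simp
qed

lemma infsum_diff':
  fixes f g :: "'i \<Rightarrow> 'c::{topological_ab_group_add,t2_space}"
  assumes "f summable_on A" "g summable_on A"
  shows "infsum (\<lambda>x. f x - g x) A = infsum f A - infsum g A"
  using infsum_add[OF assms(1) summable_on_uminus[THEN iffD2, OF assms(2)]] infsum_uminus[of g A] by simp

lemma infsum_nat_shift:
  fixes f :: "nat \<Rightarrow> 'c::banach"
  assumes "f summable_on UNIV"
  shows "(\<Sum>\<^sub>\<infinity>m. f (Suc m)) = (\<Sum>\<^sub>\<infinity>m. f m) - f 0"
proof -
  have U: "UNIV = insert 0 (range Suc)" by (auto simp: image_iff) (metis not0_implies_Suc)
  have s: "f summable_on range Suc" by (rule summable_on_subset_banach[OF assms]) simp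
  have "(\<Sum>\<^sub>\<infinity>m. f m) = f 0 + infsum f (range Suc)"
    by (subst U, rule infsum_insert[OF s]) auto
  also have "infsum f (range Suc) = (\<Sum>\<^sub>\<infinity>m. f (Suc m))"
    by (subst infsum_reindex) (auto simp: o_def)
  finally show ?thesis by simp
qed

context dyn begin

lemma diff_comm: assumes "a \<in> commutant \<sigma>" "b \<in> commutant \<sigma>"
  shows "(\<lambda>n x. a n x - b n x) \<in> commutant \<sigma>"
proof -
  have "(\<lambda>n x. a n x + (-1) * b n x) \<in> commutant \<sigma>" by (rule add_comm[OF assms(1) smult_comm[OF assms(2)]])
  moreover have "(\<lambda>n x. a n x + (-1) * b n x) = (\<lambda>n x. a n x - b n x)" by (simp add: fun_eq_iff)
  ultimately show ?thesis by simp
qed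

lemma mult_summ: assumes "a \<in> commutant \<sigma>" "b \<in> commutant \<sigma>"
  shows "(\<lambda>k. a k x * b (n-k) x) summable_on UNIV"
proof (rule infsum_bound(1))
  show "(\<lambda>k. supn (a k) * nrm b) summable_on UNIV" by (rule summable_on_cmult_left[OF comm_summ[OF assms(1)]])
  fix k show "norm (a k x * b (n-k) x) \<le> supn (a k) * nrm b"
    unfolding norm_mult by (intro mult_mono comm_bound assms supn_le_nrm comm_supn_nonneg order_trans[OF comm_bound supn_le_nrm]) auto
qed

lemma supn_const1: "supn (\<lambda>_. 1) = 1" by (simp add: supn_def)

lemma nrm_e: "nrm e = 1"
  unfolding e_def emb_single by (subst nrm_single) (auto simp: supn_const1)

definition npow :: "(int \<Rightarrow> 'a \<Rightarrow> complex) \<Rightarrow> nat \<Rightarrow> int \<Rightarrow> 'a \<Rightarrow> complex" where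
  "npow b m = (l1_mult \<sigma> b ^^ m) e"

lemma npow_0: "npow b 0 = e" by (simp add: npow_def)
lemma npow_Suc: "npow b (Suc m) = l1_mult \<sigma> b (npow b m)" by (simp add: npow_def)

lemma npow_comm: assumes "b \<in> commutant \<sigma>"
  shows "npow b m \<in> commutant \<sigma>" "nrm (npow b m) \<le> nrm b ^ m"
proof -
  have "npow b m \<in> commutant \<sigma> \<and> nrm (npow b m) \<le> nrm b ^ m"
  proof (induction m)
    case 0 then show ?case by (simp add: npow_0 e_comm nrm_e)
  next
    case (Suc m)
    then have c: "npow b m \<in> commutant \<sigma>" by blast
    have "nrm (npow b (Suc m)) \<le> nrm b * nrm (npow b m)"
      unfolding npow_Suc by (rule mult_comm(2)[OF assms c])
    also have "\<dots> \<le> nrm b * nrm b ^ m" using Suc by (intro mult_left_mono nrm_nonneg assms) auto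
    finally show ?case using mult_comm(1)[OF assms c] by (simp add: npow_Suc)
  qed
  then show "npow b m \<in> commutant \<sigma>" "nrm (npow b m) \<le> nrm b ^ m" by auto
qed

lemma neumann:
  assumes b: "b \<in> commutant \<sigma>" and r: "nrm b < 1"
  shows "\<exists>C\<in>commutant \<sigma>. l1_mult \<sigma> (\<lambda>n x. e n x - b n x) C = e"
proof -
  define r where "r = nrm b"
  have r0: "0 \<le> r" unfolding r_def by (rule nrm_nonneg[OF b])
  have r1: "r < 1" using r by (simp add: r_def)
  have geo: "(\<lambda>m. r ^ m) summable_on UNIV"
    using summable_on_UNIV_nonneg_real_iff[of "\<lambda>m. r^m"] summable_geometric[of r] r0 r1 by simp
  note P = npow_comm[OF b]
  have pb: "cmod (npow b m k x) \<le> r ^ m" for m k x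
    using order_trans[OF comm_bound[OF P(1)] order_trans[OF supn_le_nrm[OF P(1)] P(2)]] by (simp add: r_def)
  have sb: "supn (npow b m k) \<le> r ^ m" for m k
    using order_trans[OF supn_le_nrm[OF P(1)] P(2)] by (simp add: r_def)
  define C where "C k x = (\<Sum>\<^sub>\<infinity>m. npow b m k x)" for k x
  have Cs: "(\<lambda>m. npow b m k x) summable_on UNIV" for k x
    by (rule infsum_bound(1)[OF geo]) (rule pb)
  have D2: "(\<lambda>(m,k). supn (npow b m k)) summable_on Sigma UNIV (\<lambda>_. UNIV)"
  proof (rule summable_on_SigmaI[where g="\<lambda>m. nrm (npow b m)"])
    fix m show "((\<lambda>k. case (m, k) of (m, k) \<Rightarrow> supn (npow b m k)) has_sum nrm (npow b m)) UNIV"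
      unfolding nrm_def using has_sum_infsum[OF comm_summ[OF P(1)]] by simp
    show "(\<lambda>m. nrm (npow b m)) summable_on UNIV"
      by (rule summable_on_comparison_test[OF geo]) (use P nrm_nonneg in \<open>auto simp: r_def\<close>)
  qed (use comm_supn_nonneg P in auto)
  then have D2': "(\<lambda>(k,m). supn (npow b m k)) summable_on UNIV \<times> UNIV"
    by (subst summable_on_swap) (simp add: case_prod_unfold)
  have Dsum: "(\<lambda>k. \<Sum>\<^sub>\<infinity>m. supn (npow b m k)) summable_on UNIV"
    using summable_on_Sigma_banach[of "\<lambda>k m. supn (npow b m k)" UNIV "\<lambda>_. UNIV"] D2' by simp
  have Dk: "(\<lambda>m. supn (npow b m k)) summable_on UNIV" for k
    by (rule summable_on_comparison_test[OF geo sb]) (rule comm_supn_nonneg[OF P(1)])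
  have Cbound: "cmod (C k x) \<le> (\<Sum>\<^sub>\<infinity>m. supn (npow b m k))" for k x
    unfolding C_def by (rule infsum_bound(2)[OF Dk]) (rule comm_bound[OF P(1)])
  have Ccont: "continuous_on UNIV (C k)" for k
    unfolding C_def by (rule cont_infsum[OF comm_cont[OF P(1)] geo pb])
  have Csupn: "(\<lambda>k. supn (C k)) summable_on UNIV"
    by (rule summable_on_comparison_test[OF Dsum]) (auto intro: supn_le Cbound supn_nonneg Ccont)
  have Csupp: "x \<in> Fix \<sigma> k" if nz: "C k x \<noteq> 0" for k x
  proof -
    have "\<exists>m. npow b m k x \<noteq> 0"
    proof (rule ccontr)
      assume "\<not> ?thesis"
      then have "C k x = (\<Sum>\<^sub>\<infinity>m::nat. 0)" unfolding C_def by (intro infsum_cong) auto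
      with nz show False by simp
    qed
    then show ?thesis using commD[OF P(1)] by blast
  qed
  have CA: "C \<in> commutant \<sigma>" unfolding comm_iff l1_def using Ccont Csupn Csupp by blast
  have bC: "l1_mult \<sigma> b C n x = C n x - e n x" for n x
  proof -
    have fam: "(\<lambda>(k,m). b k x * npow b m (n-k) x) summable_on UNIV \<times> UNIV"
    proof -
      have "(\<lambda>(k,m). supn (b k) * r ^ m) summable_on UNIV"
        by (rule prod_summ[OF comm_summ[OF b] geo]) (auto intro: comm_supn_nonneg b r0 zero_le_power)
      then have "(\<lambda>p. norm ((\<lambda>(k,m). b k x * npow b m (n-k) x) p)) summable_on UNIV"
        by (rule summable_on_comparison_test) (auto simp: norm_mult intro!: mult_mono comm_bound b pb r0 comm_supn_nonneg)
      then show ?thesis by (simp add: abs_summable_summable)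
    qed
    have "l1_mult \<sigma> b C n x = (\<Sum>\<^sub>\<infinity>k. b k x * C (n-k) x)" by (rule mult_pt[OF b CA])
    also have "\<dots> = (\<Sum>\<^sub>\<infinity>k. \<Sum>\<^sub>\<infinity>m. b k x * npow b m (n-k) x)"
      unfolding C_def by (rule infsum_cong) (rule infsum_cmult_right[symmetric], rule Cs)
    also have "\<dots> = (\<Sum>\<^sub>\<infinity>m. \<Sum>\<^sub>\<infinity>k. b k x * npow b m (n-k) x)"
      by (rule infsum_swap_banach) (use fam in simp)
    also have "\<dots> = (\<Sum>\<^sub>\<infinity>m. npow b (Suc m) n x)"
      by (rule infsum_cong) (simp add: npow_Suc mult_pt[OF b P(1)])
    also have "\<dots> = C n x - npow b 0 n x"
      unfolding C_def by (rule infsum_nat_shift[OF Cs])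
    finally show ?thesis by (simp add: npow_0)
  qed
  have dA: "(\<lambda>n x. e n x - b n x) \<in> commutant \<sigma>" by (rule diff_comm[OF e_comm b])
  have "l1_mult \<sigma> (\<lambda>n x. e n x - b n x) C = e"
  proof (intro ext)
    fix n x
    have "l1_mult \<sigma> (\<lambda>n x. e n x - b n x) C n x = (\<Sum>\<^sub>\<infinity>k. e k x * C (n-k) x - b k x * C (n-k) x)"
      by (simp add: mult_pt[OF dA CA] left_diff_distrib)
    also have "\<dots> = (\<Sum>\<^sub>\<infinity>k. e k x * C (n-k) x) - (\<Sum>\<^sub>\<infinity>k. b k x * C (n-k) x)"
      by (rule infsum_diff') (intro mult_summ e_comm b CA)+
    also have "\<dots> = l1_mult \<sigma> e C n x - l1_mult \<sigma> b C n x"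
      by (simp add: mult_pt[OF e_comm CA] mult_pt[OF b CA])
    also have "\<dots> = e n x" using bC by (simp add: e_left)
    finally show "l1_mult \<sigma> (\<lambda>n x. e n x - b n x) C n x = e n x" .
  qed
  with CA show ?thesis by blast
qed

lemma ch_bound: assumes phi: "\<phi> \<in> characters \<sigma>" and a: "a \<in> commutant \<sigma>"
  shows "cmod (\<phi> a) \<le> nrm a"
proof (rule ccontr)
  assume "\<not> ?thesis"
  then have lt: "nrm a < cmod (\<phi> a)" by simp
  then have nz: "\<phi> a \<noteq> 0" using nrm_nonneg[OF a] by auto
  define b where "b = (\<lambda>n x. (1 / \<phi> a) * a n x)"
  have bA: "b \<in> commutant \<sigma>" unfolding b_def by (rule smult_comm[OF a])
  have "nrm b = nrm a / cmod (\<phi> a)" unfolding b_def nrm_smult[OF a] by (simp add: norm_divide)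
  then have "nrm b < 1" using lt nz by (simp add: divide_less_eq)
  then obtain C where C: "C \<in> commutant \<sigma>" "l1_mult \<sigma> (\<lambda>n x. e n x - b n x) C = e"
    using neumann[OF bA] by blast
  have "\<phi> b = (1 / \<phi> a) * \<phi> a" unfolding b_def by (rule ch_smult[OF phi a])
  then have phib: "\<phi> b = 1" using nz by simp
  have dA: "(\<lambda>n x. e n x - b n x) \<in> commutant \<sigma>" by (rule diff_comm[OF e_comm bA])
  have "\<phi> (\<lambda>n x. e n x - b n x) = 0" using ch_diff[OF phi e_comm bA] ch_e[OF phi] phib by simp
  then have "\<phi> e = 0" using ch_mult[OF phi dA C(1)] C(2) by simp
  with ch_e[OF phi] show False by simp
qed

end


lemma finite_closed_cover:
  fixes C :: "'i \<Rightarrow> 'b::topological_space set"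
  assumes "finite M" "\<And>m. m \<in> M \<Longrightarrow> closed (C m)"
  shows "open W \<Longrightarrow> W \<noteq> {} \<Longrightarrow> W \<subseteq> (\<Union>m\<in>M. C m) \<Longrightarrow> \<exists>m\<in>M. \<exists>W2. open W2 \<and> W2 \<noteq> {} \<and> W2 \<subseteq> W \<and> W2 \<subseteq> C m"
  using assms
proof (induction M arbitrary: W rule: finite_induct)
  case empty then show ?case by auto
next
  case (insert m M)
  show ?case
  proof (cases "W \<subseteq> C m")
    case True
    then show ?thesis using insert.prems(1,2) by blast
  next
    case False
    have "open (W - C m)" using insert.prems(1,4) by (intro open_Diff) auto
    moreover have "W - C m \<noteq> {}" using False by blast
    moreover have "W - C m \<subseteq> (\<Union>m\<in>M. C m)" using insert.prems(3) by blast
    moreover have "\<And>m. m \<in> M \<Longrightarrow> closed (C m)" using insert.prems(4) by blast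
    ultimately have "\<exists>m'\<in>M. \<exists>W2. open W2 \<and> W2 \<noteq> {} \<and> W2 \<subseteq> W - C m \<and> W2 \<subseteq> C m'"
      using insert.IH by blast
    then show ?thesis by blast
  qed
qed

context dyn begin

lemma hausdorff_eucl: "Hausdorff_space (euclidean :: 'a topology)"
  unfolding Hausdorff_space_def disjnt_def by (metis hausdorff open_openin)

lemma dense_fin:
  assumes V: "open V" "V \<noteq> {}" "V \<subseteq> Fix \<sigma> (int n)" and n: "1 \<le> n"
  shows "\<exists>y\<in>V. \<exists>p. 1 \<le> p \<and> p dvd n \<and> y \<in> interior (Per \<sigma> p)"
proof -
  define Pr where "Pr p \<longleftrightarrow> 1 \<le> p \<and> (\<exists>W. open W \<and> W \<noteq> {} \<and> W \<subseteq> V \<and> W \<subseteq> Fix \<sigma> (int p))" for p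
  have "Pr n" using V n by (auto simp: Pr_def)
  define p where "p = (LEAST p. Pr p)"
  have Pp: "Pr p" unfolding p_def by (rule LeastI[where P=Pr, OF \<open>Pr n\<close>])
  have pmin: "\<And>m. Pr m \<Longrightarrow> p \<le> m" unfolding p_def by (rule Least_le)
  obtain W where W: "open W" "W \<noteq> {}" "W \<subseteq> V" "W \<subseteq> Fix \<sigma> (int p)" and p1: "1 \<le> p"
    using Pp by (auto simp: Pr_def)
  define W' where "W' = W - (\<Union>m\<in>{1..<p}. Fix \<sigma> (int m))"
  have oW': "open W'" unfolding W'_def using W(1) Fix_closed by (intro open_Diff closed_UN) auto
  have "W' \<noteq> {}"
  proof
    assume "W' = {}"
    then have cov: "W \<subseteq> (\<Union>m\<in>{1..<p}. Fix \<sigma> (int m))" unfolding W'_def by blast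
    have "\<exists>m\<in>{1..<p}. \<exists>W2. open W2 \<and> W2 \<noteq> {} \<and> W2 \<subseteq> W \<and> W2 \<subseteq> Fix \<sigma> (int m)"
      by (rule finite_closed_cover[OF _ _ W(1) W(2) cov]) (auto intro: Fix_closed)
    then obtain m W2 where m: "m \<in> {1..<p}" "open W2" "W2 \<noteq> {}" "W2 \<subseteq> W" "W2 \<subseteq> Fix \<sigma> (int m)"
      by blast
    have "Pr m" unfolding Pr_def using m W(3) by (intro conjI exI[of _ W2]) auto
    from pmin[OF this] m(1) show False by simp
  qed
  then obtain y where y: "y \<in> W'" by blast
  have sub: "W' \<subseteq> Per \<sigma> p"
    unfolding W'_def Per_def using W(4) p1 by (auto simp: Fix_def)
  have yint: "y \<in> interior (Per \<sigma> p)" using interior_maximal[OF sub oW'] y by blast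
  have "y \<in> Fix \<sigma> (int n)" using y V W unfolding W'_def by blast
  then have "int p dvd int n" using Per_dvd sub y by blast
  then have "p dvd n" by simp
  moreover have "y \<in> V" using y W unfolding W'_def by blast
  ultimately show ?thesis using yint p1 by blast
qed

lemma shrink: fixes U :: "'a set" assumes "open U" "x \<in> U"
  obtains V where "open V" "x \<in> V" "closure V \<subseteq> U"
proof -
  have cl0: "closed {x}" "closed (-U)" "{x} \<inter> -U = {}" using assms by auto
  obtain g :: "'a \<Rightarrow> real" where g: "continuous_on UNIV g" "\<And>z. 0 \<le> g z" "\<And>z. g z \<le> 1"
      "\<And>z. z \<in> {x} \<Longrightarrow> g z = 1" "\<And>z. z \<in> -U \<Longrightarrow> g z = 0"
    by (rule urysohn[OF cl0]) blast
  define V where "V = {z. (\<lambda>_. 1/2) z < g z}"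
  define K where "K = {z. (\<lambda>_. 1/2) z \<le> g z}"
  have oV: "open V" unfolding V_def by (rule open_Collect_less) (auto intro: continuous_on_const g(1))
  have cl: "closed K" unfolding K_def by (rule closed_Collect_le) (auto intro: continuous_on_const g(1))
  have "closure V \<subseteq> K" by (rule closure_minimal[OF _ cl]) (auto simp: V_def K_def)
  also have "K \<subseteq> U"
  proof
    fix z assume "z \<in> K"
    then have "g z \<ge> 1/2" by (simp add: K_def)
    then show "z \<in> U" using g(5)[of z] by (cases "z \<in> U") auto
  qed
  finally have cV: "closure V \<subseteq> U" .
  have xV: "x \<in> V" using g(4)[of x] by (simp add: V_def)
  show ?thesis by (rule that[OF oV xV cV])
qed

lemma dense_all:
  assumes U: "open U" "U \<noteq> {}"
  shows "\<exists>y\<in>U. y \<in> Aper \<sigma> \<or> (\<exists>p. 1 \<le> p \<and> y \<in> interior (Per \<sigma> p))"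
proof (cases "U \<inter> Aper \<sigma> = {}")
  case False then show ?thesis by blast
next
  case True
  obtain x where x: "x \<in> U" using U by blast
  obtain V where V: "open V" "x \<in> V" "closure V \<subseteq> U" using shrink[OF U(1) x] by blast
  define G where "G = (\<lambda>q::nat. Fix \<sigma> (int (Suc q)) \<inter> closure V) ` UNIV"
  have "\<exists>T\<in>G. interior T \<noteq> {}"
  proof (rule ccontr)
    assume "\<not> ?thesis"
    then have allE: "\<And>T. T \<in> G \<Longrightarrow> closedin euclidean T \<and> euclidean interior_of T = {}"
      unfolding G_def by (auto intro!: closed_Int Fix_closed)
    have "euclidean interior_of \<Union>G = {}"
    proof (rule Baire_category_alt)
      show "completely_metrizable_space (euclidean :: 'a topology) \<or> locally_compact_space (euclidean :: 'a topology) \<and> regular_space (euclidean :: 'a topology)"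
        using compact_imp_locally_compact_space[of "euclidean :: 'a topology"] cpt
          normal_t1_imp_regular_space[OF normal Hausdorff_imp_t1_space[OF hausdorff_eucl]]
        by (simp add: compact_space_def)
      show "countable G" unfolding G_def by simp
    qed (use allE in auto)
    moreover have "V \<subseteq> \<Union>G"
    proof
      fix z assume z: "z \<in> V"
      then have "z \<in> U" using V closure_subset by blast
      then have "z \<notin> Aper \<sigma>" using True by blast
      then obtain p :: nat where "1 \<le> p" "ipow \<sigma> (int p) z = z" by (auto simp: Aper_def)
      then have "z \<in> Fix \<sigma> (int (Suc (p - 1))) \<inter> closure V" using z closure_subset by (auto simp: Fix_def)
      then show "z \<in> \<Union>G" unfolding G_def by blast
    qed
    then have "V \<subseteq> interior (\<Union>G)" using V(1) interior_maximal by blast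
    ultimately show False using V(2) by simp
  qed
  then obtain q where q: "interior (Fix \<sigma> (int (Suc q)) \<inter> closure V) \<noteq> {}" unfolding G_def by blast
  define Ob where "Ob = interior (Fix \<sigma> (int (Suc q)) \<inter> closure V)"
  have "Ob \<subseteq> Fix \<sigma> (int (Suc q))" "Ob \<subseteq> U" using V(3) interior_subset unfolding Ob_def by blast+
  moreover have "open Ob" "Ob \<noteq> {}" using q unfolding Ob_def by auto
  ultimately obtain y p where "y \<in> Ob" "1 \<le> p" "y \<in> interior (Per \<sigma> p)"
    using dense_fin[of Ob "Suc q"] by auto
  then show ?thesis using \<open>Ob \<subseteq> U\<close> by blast
qed

end


definition hs :: "complex \<Rightarrow> complex" where "hs z = z / of_real (sqrt (cmod z))"

lemma norm_hs: "cmod (hs z) = sqrt (cmod z)"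
proof (cases "z = 0")
  case False
  then show ?thesis by (simp add: hs_def norm_divide real_div_sqrt)
qed (simp add: hs_def)

lemma hs_cont: "continuous_on UNIV hs"
proof (rule continuous_at_imp_continuous_on, intro ballI)
  fix z :: complex
  show "isCont hs z"
  proof (cases "z = 0")
    case True
    have "((\<lambda>w. sqrt (cmod w)) \<longlongrightarrow> sqrt (cmod 0)) (at (0::complex))" by (intro tendsto_intros)
    then have "((\<lambda>w. cmod (hs w)) \<longlongrightarrow> 0) (at 0)" by (simp add: norm_hs)
    then have "(hs \<longlongrightarrow> 0) (at 0)" by (rule tendsto_norm_zero_cancel)
    then show ?thesis using True by (simp add: isCont_def hs_def)
  next
    case False
    then show ?thesis unfolding hs_def by (intro continuous_intros) auto
  qed
qed

lemma hs_fact: "of_real (sqrt (cmod z)) * hs z = z"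
  by (cases "z = 0") (auto simp: hs_def)

lemma open_nz: fixes f :: "'b::topological_space \<Rightarrow> complex" assumes "continuous_on UNIV f" shows "open {x. f x \<noteq> 0}"
proof -
  have "open (f -` (-{0}))" by (rule open_vimage) (auto intro: assms)
  moreover have "f -` (-{0}) = {x. f x \<noteq> 0}" by auto
  ultimately show ?thesis by simp
qed

context dyn begin

lemma single_comm': "continuous_on UNIV f \<Longrightarrow> (\<forall>x. f x \<noteq> 0 \<longrightarrow> x \<in> Fix \<sigma> k) \<Longrightarrow> single k f \<in> commutant \<sigma>"
  by (rule single_comm) auto

lemma omega_x_single: assumes y: "y \<in> Aper \<sigma>" and f: "continuous_on UNIV f" "\<forall>x. f x \<noteq> 0 \<longrightarrow> x \<in> Fix \<sigma> k"
  shows "omega_x \<sigma> y (single k f) = f y"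
proof -
  have "omega_x \<sigma> y (single k f) = single k f 0 y" using single_comm'[OF f] by (simp add: omega_x_def)
  also have "\<dots> = f y"
  proof (cases "k = 0")
    case False
    then have "f y = 0" using f(2) Aper_Fix[OF y] by blast
    then show ?thesis using False by (simp add: single_def)
  qed (simp add: single_def)
  finally show ?thesis .
qed

lemma omega_xc_single: assumes y: "y \<in> interior (Per \<sigma> p)" and d: "cmod d = 1"
  and f: "continuous_on UNIV f" "\<forall>x. f x \<noteq> 0 \<longrightarrow> x \<in> Fix \<sigma> k"
  shows "omega_xc \<sigma> y d (single k f) = f y * d powi (k div int p)"
proof -
  note mp = min_period_Per[OF y]
  have yP: "y \<in> Per \<sigma> p" using y interior_subset by blast
  have "omega_xc \<sigma> y d (single k f) = (\<Sum>\<^sub>\<infinity>j. single k f (j * int p) y * d powi j)"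
    using single_comm'[OF f] by (simp add: omega_xc_def mp)
  also have "\<dots> = f y * d powi (k div int p)"
  proof (cases "int p dvd k")
    case True
    then obtain j0 where k: "k = j0 * int p" by (auto simp: dvd_def mult.commute)
    have "(\<Sum>\<^sub>\<infinity>j. single k f (j * int p) y * d powi j) = single k f (j0 * int p) y * d powi j0"
      by (rule infsum_single_nz) (use mp(2) k in \<open>auto simp: single_def\<close>)
    then show ?thesis using k mp(2) by (simp add: single_def)
  next
    case False
    then have fy: "f y = 0" using f(2) Per_dvd[OF yP] by blast
    have "(\<Sum>\<^sub>\<infinity>j. single k f (j * int p) y * d powi j) = (\<Sum>\<^sub>\<infinity>j::int. 0)"
      by (rule infsum_cong) (use False fy in \<open>auto simp: single_def\<close>)
    then show ?thesis using fy by simp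
  qed
  finally show ?thesis .
qed

context
  fixes \<phi> x0 assumes phi: "\<phi> \<in> characters \<sigma>" and x0: "\<And>f. continuous_on UNIV f \<Longrightarrow> \<phi> (emb f) = f x0"
begin

lemma ch_single_zero: assumes f: "continuous_on UNIV f" "\<forall>x. f x \<noteq> 0 \<longrightarrow> x \<in> Fix \<sigma> k" and z: "f x0 = 0"
  shows "\<phi> (single k f) = 0"
proof -
  define u where "u x = complex_of_real (sqrt (cmod (f x)))" for x
  define v where "v x = hs (f x)" for x
  have cu: "continuous_on UNIV u" unfolding u_def by (intro continuous_intros f)
  have cv: "continuous_on UNIV v"
    unfolding v_def using continuous_on_compose[OF f(1) continuous_on_subset[OF hs_cont]] by (simp add: o_def)
  have vs: "\<forall>x. v x \<noteq> 0 \<longrightarrow> x \<in> Fix \<sigma> k" using f(2) by (auto simp: v_def hs_def)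
  have vA: "single k v \<in> commutant \<sigma>" by (rule single_comm'[OF cv vs])
  have eq: "l1_mult \<sigma> (emb u) (single k v) = single k f"
    by (auto simp: fun_eq_iff mult_emb_left single_def u_def v_def hs_fact)
  have "\<phi> (single k f) = \<phi> (emb u) * \<phi> (single k v)"
    using ch_mult[OF phi emb_comm[OF cu] vA] eq by simp
  also have "\<phi> (emb u) = 0" using x0[OF cu] z by (simp add: u_def)
  finally show ?thesis by simp
qed

lemma caseI: assumes nI: "\<And>q. 1 \<le> q \<Longrightarrow> x0 \<notin> interior (Fix \<sigma> (int q))"
  and f: "continuous_on UNIV f" "\<forall>x. f x \<noteq> 0 \<longrightarrow> x \<in> Fix \<sigma> k"
  shows "\<phi> (single k f) = f x0"
proof (cases "k = 0")
  case True
  then show ?thesis using x0[OF f(1)] by (simp add: emb_single)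
next
  case False
  have "f x0 = 0"
  proof (rule ccontr)
    assume nz: "f x0 \<noteq> 0"
    have "open {x. f x \<noteq> 0}" by (rule open_nz[OF f(1)])
    moreover have "{x. f x \<noteq> 0} \<subseteq> Fix \<sigma> (int (nat \<bar>k\<bar>))"
      using f(2) Fix_neg[of k] by (cases "k \<ge> 0") auto
    ultimately have "x0 \<in> interior (Fix \<sigma> (int (nat \<bar>k\<bar>)))" using nz interior_maximal by blast
    with nI[of "nat \<bar>k\<bar>"] False show False by simp
  qed
  then show ?thesis using ch_single_zero[OF f] by simp
qed

end
end


context dyn begin

lemma min_period_props: assumes x: "x0 \<in> interior (Fix \<sigma> (int q))" and q: "1 \<le> q"
  shows "1 \<le> min_int_period \<sigma> x0" "x0 \<in> interior (Fix \<sigma> (int (min_int_period \<sigma> x0)))"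
    "\<And>k. x0 \<in> interior (Fix \<sigma> k) \<Longrightarrow> int (min_int_period \<sigma> x0) dvd k"
proof -
  define P where "P n \<longleftrightarrow> 1 \<le> n \<and> x0 \<in> interior (Fix \<sigma> (int n))" for n
  have Pq: "P q" using x q by (simp add: P_def)
  have "P (min_int_period \<sigma> x0)" unfolding min_int_period_def P_def[symmetric] by (rule LeastI[where P=P, OF Pq])
  then show n1: "1 \<le> min_int_period \<sigma> x0" and xn: "x0 \<in> interior (Fix \<sigma> (int (min_int_period \<sigma> x0)))"
    by (auto simp: P_def)
  have least: "P m \<Longrightarrow> min_int_period \<sigma> x0 \<le> m" for m
    unfolding min_int_period_def P_def[symmetric] by (rule Least_le)
  fix k assume xk: "x0 \<in> interior (Fix \<sigma> k)"
  show "int (min_int_period \<sigma> x0) dvd k"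
  proof (cases "k = 0")
    case False
    define n where "n = min_int_period \<sigma> x0"
    define g where "g = gcd k (int n)"
    have gpos: "g > 0" using False by (simp add: g_def)
    have "Fix \<sigma> k \<inter> Fix \<sigma> (int n) \<subseteq> Fix \<sigma> g" unfolding g_def using Fix_gcd by blast
    then have "interior (Fix \<sigma> k \<inter> Fix \<sigma> (int n)) \<subseteq> interior (Fix \<sigma> g)" by (rule interior_mono)
    moreover have "x0 \<in> interior (Fix \<sigma> k \<inter> Fix \<sigma> (int n))" using xk xn by (simp add: n_def)
    ultimately have "x0 \<in> interior (Fix \<sigma> (int (nat g)))" using gpos by auto
    then have "P (nat g)" using gpos by (simp add: P_def)
    then have "n \<le> nat g" using least by (simp add: n_def)
    moreover have "g dvd int n" by (simp add: g_def)
    then have "g \<le> int n" using n1 n_def by (simp add: zdvd_imp_le)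
    ultimately have "g = int n" using gpos by linarith
    then show ?thesis by (metis g_def gcd_dvd1 n_def)
  qed simp
qed

context
  fixes \<phi> x0 assumes phi: "\<phi> \<in> characters \<sigma>" and x0: "\<And>f. continuous_on UNIV f \<Longrightarrow> \<phi> (emb f) = f x0"
begin

lemma caseII: assumes x: "x0 \<in> interior (Fix \<sigma> (int q))" and q: "1 \<le> q"
  shows "\<exists>c. cmod c = 1 \<and> (\<forall>k f. continuous_on UNIV f \<longrightarrow> (\<forall>x. f x \<noteq> 0 \<longrightarrow> x \<in> Fix \<sigma> k) \<longrightarrow>
           \<phi> (single k f) = f x0 * c powi (k div int (min_int_period \<sigma> x0)))"
proof -
  define n where "n = min_int_period \<sigma> x0"
  note mp = min_period_props[OF x q, folded n_def]
  have cl0: "closed {x0}" "closed (- interior (Fix \<sigma> (int n)))" "{x0} \<inter> - interior (Fix \<sigma> (int n)) = {}"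
    using mp(2) by auto
  obtain g :: "'a \<Rightarrow> real" where g: "continuous_on UNIV g" "\<And>z. 0 \<le> g z" "\<And>z. g z \<le> 1"
      "\<And>z. z \<in> {x0} \<Longrightarrow> g z = 1" "\<And>z. z \<in> - interior (Fix \<sigma> (int n)) \<Longrightarrow> g z = 0"
    by (rule urysohn[OF cl0]) blast
  define G where "G y = complex_of_real (g y)" for y
  have cG: "continuous_on UNIV G" unfolding G_def by (intro continuous_intros g(1))
  have Gx0: "G x0 = 1" using g(4) by (simp add: G_def)
  have Gs: "G y \<noteq> 0 \<Longrightarrow> y \<in> Fix \<sigma> (int n)" for y
    using g(5)[of y] interior_subset by (auto simp: G_def)
  define Pj where "Pj j = single (j * int n) (\<lambda>y. G y ^ nat \<bar>j\<bar>)" for j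
  have Pjs: "\<forall>y. G y ^ nat \<bar>j\<bar> \<noteq> 0 \<longrightarrow> y \<in> Fix \<sigma> (j * int n)" for j
  proof (cases "j = 0")
    case False
    then show ?thesis using Gs Fix_mult by (auto simp: power_eq_0_iff)
  qed simp
  have PjA: "Pj j \<in> commutant \<sigma>" for j
    unfolding Pj_def by (rule single_comm'[OF _ Pjs]) (intro continuous_intros cG)
  define c where "c = \<phi> (Pj 1)"
  define c' where "c' = \<phi> (Pj (-1))"
  have P0: "Pj 0 = e" by (simp add: Pj_def e_def emb_single)
  have Psucc: "Pj (int m + 1) = l1_mult \<sigma> (Pj 1) (Pj (int m))" for m
  proof -
    have "l1_mult \<sigma> (Pj 1) (Pj (int m)) = single (1 * int n + int m * int n) (\<lambda>x. G x ^ nat \<bar>1\<bar> * G x ^ nat \<bar>int m\<bar>)"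
      unfolding Pj_def by (rule mult_single[OF PjA[of 1, unfolded Pj_def] PjA[of "int m", unfolded Pj_def]])
    also have "\<dots> = Pj (int m + 1)" by (simp add: Pj_def algebra_simps nat_add_distrib)
    finally show ?thesis by simp
  qed
  have Ppred: "Pj (- int (Suc m)) = l1_mult \<sigma> (Pj (-1)) (Pj (- int m))" for m
  proof -
    have "l1_mult \<sigma> (Pj (-1)) (Pj (- int m)) = single ((-1) * int n + (- int m) * int n) (\<lambda>x. G x ^ nat \<bar>-1\<bar> * G x ^ nat \<bar>- int m\<bar>)"
      unfolding Pj_def by (rule mult_single[OF PjA[of "-1", unfolded Pj_def] PjA[of "- int m", unfolded Pj_def]])
    also have "\<dots> = Pj (- int (Suc m))"
    proof -
      have "(-1) * int n + (- int m) * int n = (- int (Suc m)) * int n" by (simp add: algebra_simps)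
      moreover have "nat \<bar>- int (Suc m)\<bar> = Suc m" by simp
      ultimately show ?thesis by (simp add: Pj_def)
    qed
    finally show ?thesis by simp
  qed
  have pos: "\<phi> (Pj (int m)) = c ^ m" for m
  proof (induction m)
    case 0 then show ?case using ch_e[OF phi] P0 by simp
  next
    case (Suc m)
    have "\<phi> (Pj (int (Suc m))) = \<phi> (l1_mult \<sigma> (Pj 1) (Pj (int m)))" using Psucc[of m] by (simp add: add.commute)
    also have "\<dots> = c * c ^ m" using ch_mult[OF phi PjA PjA] Suc by (simp add: c_def)
    finally show ?case by simp
  qed
  have neg: "\<phi> (Pj (- int m)) = c' ^ m" for m
  proof (induction m)
    case 0 then show ?case using ch_e[OF phi] P0 by simp
  next
    case (Suc m)
    have "\<phi> (Pj (- int (Suc m))) = \<phi> (l1_mult \<sigma> (Pj (-1)) (Pj (- int m)))" using Ppred[of m] by simp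
    also have "\<dots> = c' * c' ^ m" using ch_mult[OF phi PjA PjA] Suc by (simp add: c'_def)
    finally show ?case by simp
  qed
  have cc': "c * c' = 1"
  proof -
    have "l1_mult \<sigma> (Pj 1) (Pj (-1)) = emb (\<lambda>x. G x * G x)"
      unfolding Pj_def using mult_single[of "int n" "\<lambda>y. G y ^ nat \<bar>1\<bar>" "-int n" "\<lambda>y. G y ^ nat \<bar>-1\<bar>"] PjA[of 1] PjA[of "-1"]
      by (simp add: Pj_def emb_single)
    then have "c * c' = \<phi> (emb (\<lambda>x. G x * G x))" using ch_mult[OF phi PjA[of 1] PjA[of "-1"]] by (simp add: c_def c'_def)
    also have "\<dots> = 1" using x0[of "\<lambda>x. G x * G x"] cG Gx0 by (simp add: continuous_on_mult)
    finally show ?thesis .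
  qed
  have supG: "supn G \<le> 1" by (rule supn_le) (use g(2,3) in \<open>simp add: G_def\<close>)
  have nP: "nrm (Pj j) \<le> 1" if "j = 1 \<or> j = -1" for j
  proof -
    have "nrm (Pj j) = supn (\<lambda>y. G y ^ nat \<bar>j\<bar>)" unfolding Pj_def by (rule nrm_single) (intro continuous_intros cG)
    then show ?thesis using that supG by auto
  qed
  have "cmod c \<le> 1" unfolding c_def using ch_bound[OF phi PjA] nP[of 1] by (meson order_trans) 
  moreover have "cmod c' \<le> 1" unfolding c'_def using ch_bound[OF phi PjA] nP[of "-1"] by (meson order_trans)
  moreover have "cmod c * cmod c' = 1" using cc' by (metis norm_mult norm_one)
  ultimately have c1: "cmod c = 1"
    by (metis mult_le_one norm_ge_zero antisym mult.commute mult_left_le_one_le)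
  have c'inv: "c' = inverse c" using cc' by (rule inverse_unique[symmetric])
  have Pphi: "\<phi> (Pj j) = c powi j" for j
  proof (cases "j \<ge> 0")
    case True
    define m where "m = nat j"
    have "j = int m" using True by (simp add: m_def)
    then show ?thesis using pos[of m] by simp
  next
    case False
    define m where "m = nat (-j)"
    have "j = - int m" using False by (simp add: m_def)
    then show ?thesis using neg[of m] c'inv by (simp add: power_int_minus power_inverse)
  qed
  show ?thesis
  proof (intro exI[of _ c] conjI allI impI)
    show "cmod c = 1" by (rule c1)
    fix k and f :: "'a \<Rightarrow> complex" assume cf: "continuous_on UNIV f" and sf: "\<forall>x. f x \<noteq> 0 \<longrightarrow> x \<in> Fix \<sigma> k"
    show "\<phi> (single k f) = f x0 * c powi (k div int (min_int_period \<sigma> x0))"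
    proof (cases "f x0 = 0")
      case True
      then show ?thesis using ch_single_zero[OF phi x0 cf sf] by simp
    next
      case False
      have "{x. f x \<noteq> 0} \<subseteq> Fix \<sigma> k" using sf by auto
      then have "x0 \<in> interior (Fix \<sigma> k)" using False interior_maximal[OF _ open_nz[OF cf]] by blast
      then obtain j where k: "k = j * int n" using mp(3) by (auto simp: dvd_def mult.commute)
      define h where "h y = f y - f x0 * G y ^ nat \<bar>j\<bar>" for y
      have ch: "continuous_on UNIV h" unfolding h_def by (intro continuous_intros cf cG)
      have sh: "\<forall>x. h x \<noteq> 0 \<longrightarrow> x \<in> Fix \<sigma> k"
      proof (intro allI impI)
        fix y assume "h y \<noteq> 0"
        then have "f y \<noteq> 0 \<or> G y ^ nat \<bar>j\<bar> \<noteq> 0" by (auto simp: h_def)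
        then show "y \<in> Fix \<sigma> k" using sf Pjs[of j] k by blast
      qed
      have h0: "h x0 = 0" by (simp add: h_def Gx0)
      have hA: "single k h \<in> commutant \<sigma>" by (rule single_comm'[OF ch sh])
      have eq: "single k f = (\<lambda>m y. single k h m y + f x0 * Pj j m y)"
        by (auto simp: fun_eq_iff single_def h_def Pj_def k)
      have "\<phi> (single k f) = \<phi> (single k h) + \<phi> (\<lambda>m y. f x0 * Pj j m y)"
        unfolding eq by (rule ch_add[OF phi hA smult_comm[OF PjA]])
      also have "\<dots> = f x0 * c powi j"
        using ch_single_zero[OF phi x0 ch sh h0] ch_smult[OF phi PjA] Pphi by simp
      finally show ?thesis using mp(1) by (simp add: k n_def)
    qed
  qed
qed

end
end


lemma unit_root: assumes "cmod c = 1" "0 < m" obtains d where "cmod d = 1" "d ^ m = c"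
proof -
  define d where "d = cis (Arg c / m)"
  have "d ^ m = cis (Arg c)" unfolding d_def using assms(2) by (simp add: Complex.DeMoivre)
  also have "\<dots> = c" using assms(1) by (subst cis_Arg) (auto simp: sgn_eq)
  finally show ?thesis using that[of d] by (simp add: d_def)
qed

context dyn begin

definition Sset where "Sset = omega_x \<sigma> ` Aper \<sigma> \<union>
      {omega_xc \<sigma> x c | x c. x \<in> (\<Union>q\<in>{1..}. interior (Per \<sigma> q)) \<and> cmod c = 1}"

lemma Sset_char: "Sset \<subseteq> characters \<sigma>"
  unfolding Sset_def using omega_x_char omega_xc_char by auto

lemma Sset_xc: assumes "y \<in> interior (Per \<sigma> p)" "1 \<le> p" "cmod d = 1" shows "omega_xc \<sigma> y d \<in> Sset"
proof -
  have "y \<in> (\<Union>q\<in>{1..}. interior (Per \<sigma> q))" using assms by auto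
  then show ?thesis unfolding Sset_def using assms(3) by blast
qed

lemma approx_single:
  assumes phi: "\<phi> \<in> characters \<sigma>" and x0: "\<And>f. continuous_on UNIV f \<Longrightarrow> \<phi> (emb f) = f x0"
    and U: "open U" "x0 \<in> U"
  shows "\<exists>\<omega>\<in>Sset. \<exists>y\<in>U. \<forall>k f. continuous_on UNIV f \<longrightarrow> (\<forall>x. f x \<noteq> 0 \<longrightarrow> x \<in> Fix \<sigma> k) \<longrightarrow>
            cmod (\<omega> (single k f) - \<phi> (single k f)) \<le> cmod (f y - f x0)"
proof (cases "\<exists>q. 1 \<le> q \<and> x0 \<in> interior (Fix \<sigma> (int q))")
  case False
  then have nI: "\<And>q. 1 \<le> q \<Longrightarrow> x0 \<notin> interior (Fix \<sigma> (int q))" by blast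
  obtain y where y: "y \<in> U" "y \<in> Aper \<sigma> \<or> (\<exists>p. 1 \<le> p \<and> y \<in> interior (Per \<sigma> p))"
    using dense_all[OF U(1)] U(2) by blast
  show ?thesis
  proof (cases "y \<in> Aper \<sigma>")
    case True
    show ?thesis
    proof (intro bexI[of _ "omega_x \<sigma> y"] bexI[OF _ y(1)] allI impI)
      fix k and f :: "'a \<Rightarrow> complex" assume f: "continuous_on UNIV f" "\<forall>x. f x \<noteq> 0 \<longrightarrow> x \<in> Fix \<sigma> k"
      show "cmod (omega_x \<sigma> y (single k f) - \<phi> (single k f)) \<le> cmod (f y - f x0)"
        using omega_x_single[OF True f] caseI[OF phi x0 nI f] by simp
    qed (use True in \<open>simp add: Sset_def\<close>)
  next
    case False
    then obtain p where p: "1 \<le> p" "y \<in> interior (Per \<sigma> p)" using y(2) by blast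
    show ?thesis
    proof (intro bexI[of _ "omega_xc \<sigma> y 1"] bexI[OF _ y(1)] allI impI)
      fix k and f :: "'a \<Rightarrow> complex" assume f: "continuous_on UNIV f" "\<forall>x. f x \<noteq> 0 \<longrightarrow> x \<in> Fix \<sigma> k"
      show "cmod (omega_xc \<sigma> y 1 (single k f) - \<phi> (single k f)) \<le> cmod (f y - f x0)"
        using omega_xc_single[OF p(2) _ f] caseI[OF phi x0 nI f] by simp
    next
      show "omega_xc \<sigma> y 1 \<in> Sset" by (rule Sset_xc[OF p(2) p(1)]) simp
    qed
  qed
next
  case True
  then obtain q where q: "1 \<le> q" "x0 \<in> interior (Fix \<sigma> (int q))" by blast
  define n where "n = min_int_period \<sigma> x0"
  note mp = min_period_props[OF q(2) q(1), folded n_def]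
  obtain c where c: "cmod c = 1" "\<And>k f. continuous_on UNIV f \<Longrightarrow> (\<forall>x. f x \<noteq> 0 \<longrightarrow> x \<in> Fix \<sigma> k) \<Longrightarrow>
           \<phi> (single k f) = f x0 * c powi (k div int n)"
    using caseII[OF phi x0 q(2) q(1)] unfolding n_def by blast
  define V where "V = U \<inter> interior (Fix \<sigma> (int n))"
  have V: "open V" "V \<noteq> {}" "V \<subseteq> Fix \<sigma> (int n)" using U mp(2) interior_subset by (auto simp: V_def)
  obtain y p where y: "y \<in> V" "1 \<le> p" "p dvd n" "y \<in> interior (Per \<sigma> p)"
    using dense_fin[OF V mp(1)] by blast
  obtain m where nm: "n = p * m" using y(3) by (auto simp: dvd_def)
  have m0: "0 < m" using nm mp(1) by (cases m) auto
  obtain d where d: "cmod d = 1" "d ^ m = c" using unit_root[OF c(1) m0] by blast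
  show ?thesis
  proof (intro bexI[of _ "omega_xc \<sigma> y d"] bexI[of _ y] allI impI)
    show "y \<in> U" using y(1) by (simp add: V_def)
    show "omega_xc \<sigma> y d \<in> Sset" by (rule Sset_xc[OF y(4) y(2) d(1)])
    fix k and f :: "'a \<Rightarrow> complex" assume f: "continuous_on UNIV f" "\<forall>x. f x \<noteq> 0 \<longrightarrow> x \<in> Fix \<sigma> k"
    have om: "omega_xc \<sigma> y d (single k f) = f y * d powi (k div int p)"
      by (rule omega_xc_single[OF y(4) d(1) f])
    have ph: "\<phi> (single k f) = f x0 * c powi (k div int n)" by (rule c(2)[OF f])
    show "cmod (omega_xc \<sigma> y d (single k f) - \<phi> (single k f)) \<le> cmod (f y - f x0)"
    proof (cases "f x0 = 0")
      case True
      then show ?thesis using om ph by (simp add: norm_mult norm_powi1[OF d(1)])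
    next
      case False
      have "{x. f x \<noteq> 0} \<subseteq> Fix \<sigma> k" using f(2) by auto
      then have "x0 \<in> interior (Fix \<sigma> k)" using False interior_maximal[OF _ open_nz[OF f(1)]] by blast
      then obtain j where k: "k = j * int n" using mp(3) by (auto simp: dvd_def mult.commute)
      have p0: "int p \<noteq> 0" using y(2) by simp
      have "k div int p = int m * j" using p0 by (simp add: k nm algebra_simps)
      then have "d powi (k div int p) = c powi j"
        by (simp add: power_int_mult d(2)[symmetric])
      moreover have "k div int n = j" using mp(1) by (simp add: k)
      ultimately have "omega_xc \<sigma> y d (single k f) - \<phi> (single k f) = (f y - f x0) * c powi j"
        using om ph by (simp add: algebra_simps)
      then show ?thesis by (simp add: norm_mult norm_powi1[OF c(1)])
    qed
  qed
qed

end


context dyn begin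

lemma approx_char:
  assumes phi: "\<phi> \<in> characters \<sigma>" and J: "finite J" "J \<subseteq> commutant \<sigma>" and eps: "\<epsilon> > 0"
  shows "\<exists>\<omega>\<in>Sset. \<forall>a\<in>J. cmod (\<omega> a - \<phi> a) < \<epsilon>"
proof -
  obtain x0 where x0: "\<And>f. continuous_on UNIV f \<Longrightarrow> \<phi> (emb f) = f x0" using ch_point[OF phi] by blast
  define \<delta> where "\<delta> = \<epsilon> / 3"
  have d0: "\<delta> > 0" using eps by (simp add: \<delta>_def)
  have "\<forall>a\<in>J. \<exists>F. finite F \<and> (\<forall>G. finite G \<and> F \<subseteq> G \<longrightarrow> \<bar>infsum (\<lambda>k. supn (a k)) (-G)\<bar> < \<delta>)"
    using tail_finite[OF comm_summ d0] J(2) by blast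
  from bchoice[OF this] obtain Fa where Fa0: "\<forall>a\<in>J. finite (Fa a) \<and> (\<forall>G. finite G \<and> Fa a \<subseteq> G \<longrightarrow> \<bar>infsum (\<lambda>k. supn (a k)) (-G)\<bar> < \<delta>)"
    by blast
  have Fa: "\<And>a. a \<in> J \<Longrightarrow> finite (Fa a)"
    "\<And>a G. a \<in> J \<Longrightarrow> finite G \<Longrightarrow> Fa a \<subseteq> G \<Longrightarrow> \<bar>infsum (\<lambda>k. supn (a k)) (-G)\<bar> < \<delta>"
    using Fa0 by blast+
  define G where "G = (\<Union>a\<in>J. Fa a)"
  have fG: "finite G" unfolding G_def using J(1) Fa(1) by blast
  define T where "T a = (\<lambda>k x. \<Sum>j\<in>G. single j (a j) k x)" for a :: "int \<Rightarrow> 'a \<Rightarrow> complex"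
  define R where "R a = (\<lambda>k x. if k \<in> G then 0 else a k x)" for a :: "int \<Rightarrow> 'a \<Rightarrow> complex"
  have Tpt: "T a k x = (if k \<in> G then a k x else 0)" for a k x
  proof -
    have "T a k x = (\<Sum>j\<in>G. if k = j then a k x else 0)" unfolding T_def by (rule sum.cong) (auto simp: single_def)
    then show ?thesis using fG by simp
  qed
  have sA: "a \<in> commutant \<sigma> \<Longrightarrow> single j (a j) \<in> commutant \<sigma>" for a j
    by (rule single_comm'[OF comm_cont]) (auto intro: commD)
  have TA: "a \<in> commutant \<sigma> \<Longrightarrow> T a \<in> commutant \<sigma>" for a
    unfolding T_def by (rule sum_comm(1)[OF phi fG sA])
  have RA: "a \<in> commutant \<sigma> \<Longrightarrow> R a \<in> commutant \<sigma>" for a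
  proof -
    assume a: "a \<in> commutant \<sigma>"
    have "R a = (\<lambda>k x. a k x - T a k x)" by (auto simp: R_def Tpt fun_eq_iff)
    then show ?thesis using diff_comm[OF a TA[OF a]] by simp
  qed
  have split: "\<psi> a = \<psi> (T a) + \<psi> (R a)" if "\<psi> \<in> characters \<sigma>" "a \<in> commutant \<sigma>" for \<psi> a
  proof -
    have "a = (\<lambda>k x. T a k x + R a k x)" by (auto simp: R_def Tpt fun_eq_iff)
    then show ?thesis using ch_add[OF that(1) TA[OF that(2)] RA[OF that(2)]] by simp
  qed
  have Tsum: "\<psi> (T a) = (\<Sum>j\<in>G. \<psi> (single j (a j)))" if "\<psi> \<in> characters \<sigma>" "a \<in> commutant \<sigma>" for \<psi> a
    unfolding T_def by (rule sum_comm(2)[OF that(1) fG sA[OF that(2)]])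
  have Rsmall: "nrm (R a) < \<delta>" if a: "a \<in> J" for a
  proof -
    have aA: "a \<in> commutant \<sigma>" using a J(2) by blast
    have "supn (R a k) = (if k \<in> G then 0 else supn (a k))" for k by (simp add: R_def)
    then have "nrm (R a) = (\<Sum>\<^sub>\<infinity>k. if k \<in> G then 0 else supn (a k))" by (simp add: nrm_def)
    also have "\<dots> = infsum (\<lambda>k. supn (a k)) (-G)"
      by (rule infsum_cong_neutral) auto
    also have "\<dots> \<le> \<bar>infsum (\<lambda>k. supn (a k)) (-G)\<bar>" by simp
    also have "\<dots> < \<delta>" by (rule Fa(2)[OF a fG]) (use a in \<open>auto simp: G_def\<close>)
    finally show ?thesis .
  qed
  define \<eta> where "\<eta> = \<delta> / (card G + 1)"
  have e0: "\<eta> > 0" using d0 by (simp add: \<eta>_def)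
  define U where "U = (\<Inter>p\<in>J \<times> G. {y. cmod (fst p (snd p) y - fst p (snd p) x0) < \<eta>})"
  have oU: "open U" unfolding U_def
  proof (rule open_INT)
    show "finite (J \<times> G)" using J(1) fG by simp
    show "\<forall>p\<in>J \<times> G. open {y. cmod (fst p (snd p) y - fst p (snd p) x0) < \<eta>}"
    proof
    fix p assume p: "p \<in> J \<times> G"
    then have "fst p \<in> commutant \<sigma>" using J(2) by auto
    then have c: "continuous_on UNIV (fst p (snd p))" by (rule comm_cont)
    have "open {y. (\<lambda>y. cmod (fst p (snd p) y - fst p (snd p) x0)) y < (\<lambda>_. \<eta>) y}"
      by (rule open_Collect_less) (intro continuous_intros c)+
    then show "open {y. cmod (fst p (snd p) y - fst p (snd p) x0) < \<eta>}" by simp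
    qed
  qed
  have xU: "x0 \<in> U" unfolding U_def using e0 by auto
  obtain \<omega> y where om: "\<omega> \<in> Sset" and y: "y \<in> U" and
    est: "\<And>k f. continuous_on UNIV f \<Longrightarrow> (\<forall>x. f x \<noteq> 0 \<longrightarrow> x \<in> Fix \<sigma> k) \<Longrightarrow>
            cmod (\<omega> (single k f) - \<phi> (single k f)) \<le> cmod (f y - f x0)"
    using approx_single[OF phi x0 oU xU] by blast
  have omc: "\<omega> \<in> characters \<sigma>" using om Sset_char by blast
  show ?thesis
  proof (intro bexI[OF _ om] ballI)
    fix a assume a: "a \<in> J"
    have aA: "a \<in> commutant \<sigma>" using a J(2) by blast
    have "cmod (\<omega> (T a) - \<phi> (T a)) = cmod (\<Sum>j\<in>G. \<omega> (single j (a j)) - \<phi> (single j (a j)))"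
      using Tsum[OF omc aA] Tsum[OF phi aA] by (simp add: sum_subtractf)
    also have "\<dots> \<le> (\<Sum>j\<in>G. cmod (\<omega> (single j (a j)) - \<phi> (single j (a j))))" by (rule norm_sum)
    also have "\<dots> \<le> (\<Sum>j\<in>G. \<eta>)"
    proof (rule sum_mono)
      fix j assume j: "j \<in> G"
      have "cmod (\<omega> (single j (a j)) - \<phi> (single j (a j))) \<le> cmod (a j y - a j x0)"
        by (rule est) (auto intro: comm_cont[OF aA] commD[OF aA])
      also have "\<dots> < \<eta>" using INT_D[OF y[unfolded U_def], of "(a,j)"] a j by simp
      finally show "cmod (\<omega> (single j (a j)) - \<phi> (single j (a j))) \<le> \<eta>" by simp
    qed
    also have "\<dots> = card G * \<eta>" by simp
    also have "\<dots> < \<delta>" using d0 by (simp add: \<eta>_def field_simps)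
    finally have t: "cmod (\<omega> (T a) - \<phi> (T a)) < \<delta>" .
    have r1: "cmod (\<omega> (R a)) < \<delta>" using ch_bound[OF omc RA[OF aA]] Rsmall[OF a] by linarith
    have r2: "cmod (\<phi> (R a)) < \<delta>" using ch_bound[OF phi RA[OF aA]] Rsmall[OF a] by linarith
    have "\<omega> a - \<phi> a = (\<omega> (T a) - \<phi> (T a)) + \<omega> (R a) - \<phi> (R a)"
      using split[OF omc aA] split[OF phi aA] by simp
    then have "cmod (\<omega> a - \<phi> a) \<le> cmod (\<omega> (T a) - \<phi> (T a)) + cmod (\<omega> (R a)) + cmod (\<phi> (R a))"
    proof -
      have "cmod (\<omega> (T a) - \<phi> (T a) + \<omega> (R a) - \<phi> (R a)) \<le> cmod (\<omega> (T a) - \<phi> (T a) + \<omega> (R a)) + cmod (\<phi> (R a))"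
        by (rule norm_triangle_ineq4)
      also have "cmod (\<omega> (T a) - \<phi> (T a) + \<omega> (R a)) \<le> cmod (\<omega> (T a) - \<phi> (T a)) + cmod (\<omega> (R a))"
        by (rule norm_triangle_ineq)
      finally show ?thesis using \<open>\<omega> a - \<phi> a = _\<close> by simp
    qed
    also have "\<dots> < \<delta> + \<delta> + \<delta>" using t r1 r2 by linarith
    finally show "cmod (\<omega> a - \<phi> a) < \<epsilon>" by (simp add: \<delta>_def)
  qed
qed

lemma closure_char: assumes phi: "\<phi> \<in> characters \<sigma>"
  shows "\<phi> \<in> gelfand_topology \<sigma> closure_of Sset"
  unfolding in_closure_of
proof (intro conjI allI impI)
  have ext: "\<phi> \<in> extensional (commutant \<sigma>)" using phi by (simp add: characters_def)
  show "\<phi> \<in> topspace (gelfand_topology \<sigma>)"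
    unfolding gelfand_topology_def using phi ext by (auto simp: PiE_def)
  fix T assume T: "\<phi> \<in> T \<and> openin (gelfand_topology \<sigma>) T"
  then obtain T' where T': "openin (product_topology (\<lambda>_. euclidean) (commutant \<sigma>)) T'" "T = T' \<inter> characters \<sigma>"
    unfolding gelfand_topology_def openin_subtopology by blast
  then obtain U where U: "finite {i \<in> commutant \<sigma>. U i \<noteq> UNIV}" "\<And>i. i \<in> commutant \<sigma> \<Longrightarrow> open (U i)"
    "\<phi> \<in> Pi\<^sub>E (commutant \<sigma>) U" "Pi\<^sub>E (commutant \<sigma>) U \<subseteq> T'"
    using T unfolding openin_product_topology_alt by auto
  define J where "J = {i \<in> commutant \<sigma>. U i \<noteq> UNIV}"
  have "\<forall>i\<in>J. \<exists>e>0. ball (\<phi> i) e \<subseteq> U i"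
  proof
    fix i assume "i \<in> J"
    then have i: "i \<in> commutant \<sigma>" by (simp add: J_def)
    have "\<phi> i \<in> U i" using U(3) i by (auto simp: PiE_def)
    then show "\<exists>e>0. ball (\<phi> i) e \<subseteq> U i" using U(2)[OF i] open_contains_ball by blast
  qed
  from bchoice[OF this] obtain E where E0: "\<forall>i\<in>J. E i > 0 \<and> ball (\<phi> i) (E i) \<subseteq> U i" by blast
  have E: "\<And>i. i \<in> J \<Longrightarrow> E i > 0 \<and> ball (\<phi> i) (E i) \<subseteq> U i" using E0 by blast
  define \<epsilon> where "\<epsilon> = (if J = {} then 1 else Min (E ` J))"
  have fJ: "finite J" using U(1) by (simp add: J_def)
  have e0: "\<epsilon> > 0" unfolding \<epsilon>_def using fJ E by auto
  have eleq: "\<epsilon> \<le> E i" if "i \<in> J" for i unfolding \<epsilon>_def using fJ that by auto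
  obtain \<omega> where om: "\<omega> \<in> Sset" "\<And>a. a \<in> J \<Longrightarrow> cmod (\<omega> a - \<phi> a) < \<epsilon>"
    using approx_char[OF phi fJ _ e0] by (auto simp: J_def)
  have omc: "\<omega> \<in> characters \<sigma>" using om Sset_char by blast
  have "\<omega> \<in> Pi\<^sub>E (commutant \<sigma>) U"
  proof (unfold PiE_def, intro IntI)
    show "\<omega> \<in> extensional (commutant \<sigma>)" using omc by (simp add: characters_def)
    show "\<omega> \<in> Pi (commutant \<sigma>) U"
    proof
      fix i assume i: "i \<in> commutant \<sigma>"
      show "\<omega> i \<in> U i"
      proof (cases "i \<in> J")
        case True
        have "dist (\<phi> i) (\<omega> i) < E i" using om(2)[OF True] eleq[OF True] by (simp add: dist_norm norm_minus_commute)
        then show ?thesis using E[OF True] by auto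
      next
        case False then show ?thesis using i by (simp add: J_def)
      qed
    qed
  qed
  then show "\<exists>y. y \<in> Sset \<and> y \<in> T" using U(4) T'(2) omc om(1) by blast
qed

end


lemma infsum_finsum:
  fixes f :: "'r \<Rightarrow> 'i \<Rightarrow> complex"
  assumes "finite R" "\<And>r. r \<in> R \<Longrightarrow> f r summable_on A"
  shows "(\<lambda>j. \<Sum>r\<in>R. f r j) summable_on A \<and> (\<Sum>r\<in>R. infsum (f r) A) = infsum (\<lambda>j. \<Sum>r\<in>R. f r j) A"
  using assms
proof (induction R rule: finite_induct)
  case empty then show ?case by simp
next
  case (insert r R)
  then have s1: "f r summable_on A" and IH: "(\<lambda>j. \<Sum>r\<in>R. f r j) summable_on A \<and> (\<Sum>r\<in>R. infsum (f r) A) = infsum (\<lambda>j. \<Sum>r\<in>R. f r j) A"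
    by auto
  have "(\<lambda>j. f r j + (\<Sum>r\<in>R. f r j)) summable_on A" by (rule summable_on_add[OF s1 IH[THEN conjunct1]])
  moreover have "infsum (f r) A + infsum (\<lambda>j. \<Sum>r\<in>R. f r j) A = infsum (\<lambda>j. f r j + (\<Sum>r\<in>R. f r j)) A"
    by (rule infsum_add[symmetric, OF s1 IH[THEN conjunct1]])
  ultimately show ?case using insert(1,2) IH by simp
qed

lemma roots_orth:
  assumes N: "0 < N"
  shows "(\<Sum>r<N. cis (2 * pi * real r / real N) powi t) = (if int N dvd t then of_nat N else 0)"
proof -
  define w where "w = cis (2 * pi * real_of_int t / real N)"
  have pw: "cis (2 * pi * real r / real N) powi t = w ^ r" for r
    unfolding w_def cis_power_int Complex.DeMoivre by (simp add: field_simps)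
  have wN: "w ^ N = 1"
  proof -
    have "w ^ N = cis (2 * pi * real_of_int t)" unfolding w_def Complex.DeMoivre using N by (simp add: field_simps)
    also have "\<dots> = 1" by (rule cis_multiple_2pi) simp
    finally show ?thesis .
  qed
  show ?thesis
  proof (cases "int N dvd t")
    case True
    then obtain q where t: "t = int N * q" by (auto simp: dvd_def)
    have "w = cis (2 * pi * real_of_int q)" unfolding w_def t using N by (simp add: field_simps)
    also have "\<dots> = 1" by (rule cis_multiple_2pi) simp
    finally show ?thesis using True by (simp add: pw)
  next
    case False
    have w1: "w \<noteq> 1"
    proof
      assume "w = 1"
      then have "exp (\<i> * complex_of_real (2 * pi * real_of_int t / real N)) = 1" by (simp add: w_def cis_conv_exp)
      then obtain n :: int where "2 * pi * real_of_int t / real N = of_int (2 * n) * pi"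
        by (auto simp: exp_eq_1)
      then have "real_of_int t = real_of_int (n * int N)" using N by (simp add: field_simps)
      then have "t = n * int N" by linarith
      with False show False by simp
    qed
    have "(\<Sum>r<N. w ^ r) = (w ^ N - 1) / (w - 1)" by (rule geometric_sum[OF w1])
    then show ?thesis using False wN by (simp add: pw)
  qed
qed

lemma fourier_unique:
  fixes b :: "int \<Rightarrow> complex"
  assumes s: "(\<lambda>j. norm (b j)) summable_on UNIV" and z: "\<And>c. cmod c = 1 \<Longrightarrow> (\<Sum>\<^sub>\<infinity>j. b j * c powi j) = 0"
  shows "b m = 0"
proof -
  have bs: "b summable_on A" for A by (rule summable_on_subset_banach[OF abs_summable_summable[OF s]]) simp
  have bsn: "(\<lambda>j. norm (b j)) summable_on A" for A by (rule summable_on_subset_banach[OF s]) simp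
  have key: "infsum b {j. int N dvd (j - m)} = 0" if N: "0 < N" for N :: nat
  proof -
    define c where "c r = cis (2 * pi * real r / real N)" for r :: nat
    have c1: "cmod (c r) = 1" for r by (simp add: c_def)
    have c0: "c r \<noteq> 0" for r using c1[of r] by auto
    have sr: "(\<lambda>j. c r powi (- m) * (b j * c r powi j)) summable_on UNIV" for r
    proof -
      have "(\<lambda>j. b j * c r powi j) summable_on UNIV"
        by (rule infsum_bound(1)[OF s]) (simp add: norm_mult norm_powi1[OF c1])
      then show ?thesis by (rule summable_on_cmult_right)
    qed
    have "0 = (\<Sum>r<N. c r powi (- m) * (\<Sum>\<^sub>\<infinity>j. b j * c r powi j))" using z[OF c1] by simp
    also have "\<dots> = (\<Sum>r<N. \<Sum>\<^sub>\<infinity>j. c r powi (- m) * (b j * c r powi j))"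
      by (rule sum.cong[OF refl], rule infsum_cmult_right[symmetric]) (rule infsum_bound(1)[OF s], simp add: norm_mult norm_powi1[OF c1])
    also have "\<dots> = (\<Sum>\<^sub>\<infinity>j. \<Sum>r<N. c r powi (- m) * (b j * c r powi j))"
      using infsum_finsum[of "{..<N}" "\<lambda>r j. c r powi (- m) * (b j * c r powi j)" UNIV] sr by simp
    also have "\<dots> = (\<Sum>\<^sub>\<infinity>j. b j * (\<Sum>r<N. c r powi (j - m)))"
    proof (rule infsum_cong)
      fix j
      have eqr: "c r powi (- m) * (b j * c r powi j) = b j * c r powi (j - m)" for r
      proof -
        have "c r powi (-m + j) = c r powi (- m) * c r powi j" using power_int_add[of "c r" "-m" j] c0[of r] by simp
        then show ?thesis by (simp add: ac_simps)
      qed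
      have "(\<Sum>r<N. c r powi (- m) * (b j * c r powi j)) = (\<Sum>r<N. b j * c r powi (j - m))"
        by (rule sum.cong[OF refl]) (rule eqr)
      then show "(\<Sum>r<N. c r powi (- m) * (b j * c r powi j)) = b j * (\<Sum>r<N. c r powi (j - m))"
        by (simp add: sum_distrib_left)
    qed
    also have "\<dots> = (\<Sum>\<^sub>\<infinity>j. of_nat N * (if int N dvd (j - m) then b j else 0))"
      by (rule infsum_cong) (simp add: c_def roots_orth[OF N])
    also have "\<dots> = of_nat N * (\<Sum>\<^sub>\<infinity>j. if int N dvd (j - m) then b j else 0)"
      by (rule infsum_cmult_right) (rule infsum_bound(1)[OF s], simp)
    also have "(\<Sum>\<^sub>\<infinity>j. if int N dvd (j - m) then b j else 0) = infsum b {j. int N dvd (j - m)}"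
      by (rule infsum_cong_neutral) auto
    finally show ?thesis using N by simp
  qed
  have "cmod (b m) < e" if e: "e > 0" for e
  proof -
    obtain F where F: "finite F" "\<And>G. finite G \<Longrightarrow> F \<subseteq> G \<Longrightarrow> \<bar>infsum (\<lambda>j. norm (b j)) (-G)\<bar> < e"
      using tail_finite[OF s e] by blast
    define N where "N = Suc (nat (\<Sum>j\<in>F. \<bar>j - m\<bar>))"
    have N0: "0 < N" by (simp add: N_def)
    have far: "j \<notin> F" if "int N dvd (j - m)" "j \<noteq> m" for j
    proof
      assume jF: "j \<in> F"
      have "\<bar>j - m\<bar> \<le> (\<Sum>j\<in>F. \<bar>j - m\<bar>)" using member_le_sum[OF jF, of "\<lambda>j. \<bar>j - m\<bar>"] F(1) by simp
      then have lt: "\<bar>j - m\<bar> < int N" by (simp add: N_def)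
      have "int N \<le> \<bar>j - m\<bar>" using that by (simp add: zdvd_imp_le dvd_abs_iff)
      with lt show False by simp
    qed
    define A where "A = {j. int N dvd (j - m)}"
    have mA: "m \<in> A" by (simp add: A_def)
    have "0 = infsum b A" using key[OF N0] by (simp add: A_def)
    also have "\<dots> = b m + infsum b (A - {m})"
      using infsum_insert[OF bs, of m "A - {m}"] mA by (simp add: insert_absorb)
    finally have bm: "b m = - infsum b (A - {m})" by (simp add: eq_neg_iff_add_eq_0)
    have "cmod (b m) \<le> infsum (\<lambda>j. norm (b j)) (A - {m})"
      using bm norm_infsum_bound[OF bsn] by simp
    also have "\<dots> \<le> infsum (\<lambda>j. norm (b j)) (-F)"
      by (rule infsum_mono_neutral[OF bsn bsn]) (use far in \<open>auto simp: A_def\<close>)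
    also have "\<dots> < e" using F(2)[OF F(1)] by simp
    finally show ?thesis .
  qed
  then show ?thesis by (metis norm_le_zero_iff not_less order_refl zero_less_norm_iff)
qed


context dyn begin

lemma separation: assumes a: "a \<in> commutant \<sigma>" and b: "b \<in> commutant \<sigma>" and ne: "a \<noteq> b"
  shows "\<exists>\<omega>\<in>Sset. \<omega> a \<noteq> \<omega> b"
proof -
  define d where "d = (\<lambda>k x. a k x - b k x)"
  have dA: "d \<in> commutant \<sigma>" unfolding d_def by (rule diff_comm[OF a b])
  have dd: "\<omega> d = \<omega> a - \<omega> b" if "\<omega> \<in> Sset" for \<omega>
    using ch_diff[OF _ a b, of \<omega>] that Sset_char unfolding d_def by blast
  obtain k x where kx: "d k x \<noteq> 0" using ne unfolding d_def by (metis eq_iff_diff_eq_0 ext)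
  define W where "W = {x. d k x \<noteq> 0}"
  have oW: "open W" unfolding W_def by (rule open_nz[OF comm_cont[OF dA]])
  have Wne: "W \<noteq> {}" using kx by (auto simp: W_def)
  have WF: "W \<subseteq> Fix \<sigma> k" using commD[OF dA] by (auto simp: W_def)
  have "\<exists>y\<in>W. y \<in> Aper \<sigma> \<or> (\<exists>p. 1 \<le> p \<and> y \<in> interior (Per \<sigma> p))"
  proof (cases "k = 0")
    case True then show ?thesis using dense_all[OF oW Wne] by blast
  next
    case False
    have WF': "W \<subseteq> Fix \<sigma> (int (nat \<bar>k\<bar>))" using WF Fix_neg[of k] by (cases "k \<ge> 0") auto
    have "1 \<le> nat \<bar>k\<bar>" using False by simp
    from dense_fin[OF oW Wne WF' this] obtain y p where "y \<in> W" "1 \<le> p" "y \<in> interior (Per \<sigma> p)" by blast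
    then show ?thesis by blast
  qed
  then obtain y where yW: "y \<in> W" and y: "y \<in> Aper \<sigma> \<or> (\<exists>p. 1 \<le> p \<and> y \<in> interior (Per \<sigma> p))" by blast
  have dky: "d k y \<noteq> 0" using yW by (simp add: W_def)
  show ?thesis
  proof (cases "y \<in> Aper \<sigma>")
    case True
    have "k = 0" using Aper_Fix[OF True] commD[OF dA dky] by blast
    then have "omega_x \<sigma> y d \<noteq> 0" using dky dA by (simp add: omega_x_def)
    moreover have "omega_x \<sigma> y \<in> Sset" using True by (simp add: Sset_def)
    ultimately show ?thesis using dd[of "omega_x \<sigma> y"] by (intro bexI[of _ "omega_x \<sigma> y"]) auto
  next
    case False
    then obtain p where p: "1 \<le> p" "y \<in> interior (Per \<sigma> p)" using y by blast
    have yP: "y \<in> Per \<sigma> p" using p(2) interior_subset by blast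
    show ?thesis
    proof (rule ccontr)
      assume nt: "\<not> (\<exists>\<omega>\<in>Sset. \<omega> a \<noteq> \<omega> b)"
      have z: "omega_xc \<sigma> y c d = 0" if "cmod c = 1" for c
        using dd[OF Sset_xc[OF p(2) p(1) that]] nt Sset_xc[OF p(2) p(1) that] by auto
      have "d (j * int p) y = 0" for j
      proof (rule fourier_unique[of "\<lambda>j. d (j * int p) y"])
        show "(\<lambda>j. norm (d (j * int p) y)) summable_on UNIV" by (rule summ_sub[OF dA p(1)])
        fix c :: complex assume c: "cmod c = 1"
        show "(\<Sum>\<^sub>\<infinity>j. d (j * int p) y * c powi j) = 0"
          using z[OF c] dA by (simp add: omega_xc_def min_period_Per(1)[OF p(2)])
      qed
      moreover obtain j where "k = j * int p" using Per_comm_dvd[OF yP dA dky] by (auto simp: dvd_def mult.commute)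
      ultimately show False using dky by simp
    qed
  qed
qed

end

theorem corollary3p11:
  fixes \<sigma> :: "'a::t2_space \<Rightarrow> 'a"
  assumes "compact (UNIV :: 'a set)"
    and "\<exists>\<tau>. homeomorphism UNIV UNIV \<sigma> \<tau>"
  defines "S \<equiv> omega_x \<sigma> ` Aper \<sigma> \<union>
      {omega_xc \<sigma> x c | x c. x \<in> (\<Union>q\<in>{1..}. interior (Per \<sigma> q)) \<and> cmod c = 1}"
  shows "S \<subseteq> characters \<sigma>
    \<and> (gelfand_topology \<sigma>) closure_of S = characters \<sigma>
    \<and> (\<forall>a\<in>commutant \<sigma>. \<forall>b\<in>commutant \<sigma>. a \<noteq> b \<longrightarrow> (\<exists>\<omega>\<in>S. \<omega> a \<noteq> \<omega> b))"
proof -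
  obtain \<tau> where h: "homeomorphism UNIV UNIV \<sigma> \<tau>" using assms(2) by blast
  have inv1: "\<And>x. \<tau> (\<sigma> x) = x" and inv2: "\<And>y. \<sigma> (\<tau> y) = y" and c1: "continuous_on UNIV \<sigma>"
    and c2: "continuous_on UNIV \<tau>"
    using h by (auto simp: homeomorphism_def)
  have bij: "bij \<sigma>" by (metis bij_betw_byWitness inv1 inv2 subset_UNIV)
  have "inv \<sigma> = \<tau>" by (rule ext) (metis bij bij_inv_eq_iff inv2)
  then have c3: "continuous_on UNIV (inv \<sigma>)" using c2 by simp
  interpret dyn \<sigma> by unfold_locales (fact assms(1), fact bij, fact c1, fact c3)
  have SS: "S = Sset" unfolding S_def Sset_def by simp
  have sub: "S \<subseteq> characters \<sigma>" unfolding SS by (rule Sset_char)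
  have "(gelfand_topology \<sigma>) closure_of S \<subseteq> topspace (gelfand_topology \<sigma>)" by (rule closure_of_subset_topspace)
  also have "\<dots> \<subseteq> characters \<sigma>" by (simp add: gelfand_topology_def)
  finally have c_sub: "(gelfand_topology \<sigma>) closure_of S \<subseteq> characters \<sigma>" .
  have "characters \<sigma> \<subseteq> (gelfand_topology \<sigma>) closure_of S" unfolding SS using closure_char by blast
  with c_sub have "(gelfand_topology \<sigma>) closure_of S = characters \<sigma>" by blast
  moreover have "\<forall>a\<in>commutant \<sigma>. \<forall>b\<in>commutant \<sigma>. a \<noteq> b \<longrightarrow> (\<exists>\<omega>\<in>S. \<omega> a \<noteq> \<omega> b)"
    unfolding SS using separation by blast
  ultimately show ?thesis using sub by blast
qed


end
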